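(* Let $D\subseteq M$ be $\operatorname{dcl}$-independent over $P$, and assume (OP) and (ind)$_D$. Then for every $A\subseteq P$, $\operatorname{cl}_D(A)=\operatorname{dcl}(A\cup D)\cap P$. In particular, $\operatorname{cl}_D$ is a pregeometry on $P$.
   Context: Let $\mathcal M=\langle M,<,+,0,\dots\rangle$ be an o-minimal expansion of an ordered group with a distinguished positive element $1$, in a language $\mathcal L$; $\operatorname{dcl}$ denotes definable closure in $\mathcal M$, and "$\mathcal L_A$-definable" means definable in $\mathcal M$ with parameters from $A\subseteq M$. Fix $P\subseteq M$ and let $\widetilde{\mathcal M}=\langle\mathcal M,P\rangle$; "$A$-definable" (unqualified) means definable in $\widetilde{\mathcal M}$ with parameters from $A\subseteq M$. $M^n$ has the product order topology; $\overline V$ is closure. A set $A$ is $\operatorname{dcl}$-independent over $P$ if no $a\in A$ lies in $\operatorname{dcl}((A\setminus\{a\})\cup P)$. For $D\subseteq M$, $P_{ind(D)}$ has universe $P$ and, for each $\mathcal L$-formula $\phi(x)$ with parameters from $D$, a relation $R_\phi=\{a\in P^{|x|}:\mathcal M\models\phi(a)\}$; for $A\subseteq P$, "$A$-definable in $P_{ind(D)}$" means definable there with parameters from $A$. $\operatorname{cl}_D$ denotes the definable closure operator of the structure $P_{ind(D)}$. (OP): for every $A\subseteq M$ with $A\setminus P$ $\operatorname{dcl}$-independent over $P$ and every $A$-definable $V\subseteq M^n$, $\overline V$ is $\mathcal L_A$-definable. (ind)$_D$: every $X\subseteq P^n$ definable in $P_{ind(D)}$ equals $\bigcup_{i=1}^l(Y_i\cap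 Q_i)$ for some $\mathcal L$-definable $Y_i\subseteq M^n$ and some $Q_i\subseteq P^n$ $\emptyset$-definable in $P_{ind(D)}$. *)

theory Defs
  imports Main
begin

text \<open>Variables are natural numbers. Function symbols are not needed: every
structure is interdefinable with its relational version (graphs of functions).\<close>

datatype 'r fm =
    Eq nat nat
  | Rel 'r "nat list"
  | Neg "'r fm"
  | Conj "'r fm" "'r fm"
  | Ex nat "'r fm"

fun fv :: "'r fm \<Rightarrow> nat set" where
  "fv (Eq i j) = {i, j}"
| "fv (Rel r vs) = set vs"
| "fv (Neg \<phi>) = fv \<phi>"
| "fv (Conj \<phi> \<psi>) = fv \<phi> \<union> fv \<psi>"
| "fv (Ex n \<phi>) = fv \<phi> - {n}"

fun sat :: "'a set \<Rightarrow> ('r \<Rightarrow> 'a list set) \<Rightarrow> (nat \<Rightarrow> 'a) \<Rightarrow> 'r fm \<Rightarrow> bool" where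
  "sat U R e (Eq i j) = (e i = e j)"
| "sat U R e (Rel r vs) = (map e vs \<in> R r)"
| "sat U R e (Neg \<phi>) = (\<not> sat U R e \<phi>)"
| "sat U R e (Conj \<phi> \<psi>) = (sat U R e \<phi> \<and> sat U R e \<psi>)"
| "sat U R e (Ex n \<phi>) = (\<exists>a\<in>U. sat U R (e(n := a)) \<phi>)"

text \<open>X \<subseteq> U^n (tuples as lists of length n) is definable in (U,R) with parameters
from A: there is a formula \<phi>(x_0..x_{n-1}, y_0..y_{k-1}) and parameters b \<in> A^k.\<close>
definition definable_in :: "'a set \<Rightarrow> ('r \<Rightarrow> 'a list set) \<Rightarrow> 'a set \<Rightarrow> nat \<Rightarrow> 'a list set \<Rightarrow> bool" where
  "definable_in U R A n X \<longleftrightarrow>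
     (\<exists>\<phi> ps. set ps \<subseteq> A \<and> fv \<phi> \<subseteq> {..<n + length ps} \<and>
        X = {xs. length xs = n \<and> set xs \<subseteq> U \<and> sat U R (\<lambda>i. (xs @ ps) ! i) \<phi>})"

definition L_def :: "('r \<Rightarrow> 'a list set) \<Rightarrow> 'a set \<Rightarrow> nat \<Rightarrow> 'a list set \<Rightarrow> bool" where
  "L_def R A n X \<longleftrightarrow> definable_in UNIV R A n X"

definition exp_rel :: "('r \<Rightarrow> 'a list set) \<Rightarrow> 'a set \<Rightarrow> 'r option \<Rightarrow> 'a list set" where
  "exp_rel R P s = (case s of None \<Rightarrow> {[p] | p. p \<in> P} | Some r \<Rightarrow> R r)"

definition P_def :: "('r \<Rightarrow> 'a list set) \<Rightarrow> 'a set \<Rightarrow> 'a set \<Rightarrow> nat \<Rightarrow> 'a list set \<Rightarrow> bool" where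
  "P_def R P A n X \<longleftrightarrow> definable_in UNIV (exp_rel R P) A n X"

definition dcl :: "('r \<Rightarrow> 'a list set) \<Rightarrow> 'a set \<Rightarrow> 'a set" where
  "dcl R A = {b. L_def R A 1 {[b]}}"

definition dcl_indep :: "('r \<Rightarrow> 'a list set) \<Rightarrow> 'a set \<Rightarrow> 'a set \<Rightarrow> bool" where
  "dcl_indep R P A \<longleftrightarrow> (\<forall>a\<in>A. a \<notin> dcl R ((A - {a}) \<union> P))"

text \<open>Closure in M^n for the product order topology (basis: open boxes).\<close>
definition box_closure :: "nat \<Rightarrow> ('a::linorder) list set \<Rightarrow> 'a list set" where
  "box_closure n V = {x. length x = n \<and>
     (\<forall>a b. length a = n \<and> length b = n \<and> (\<forall>i<n. a ! i < x ! i \<and> x ! i < b ! i) \<longrightarrow>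
        (\<exists>v\<in>V. length v = n \<and> (\<forall>i<n. a ! i < v ! i \<and> v ! i < b ! i)))}"

definition is_point_or_interval :: "('a::linorder) set \<Rightarrow> bool" where
  "is_point_or_interval I \<longleftrightarrow> (\<exists>a. I = {a}) \<or> (\<exists>a b. a < b \<and> I = {a<..<b}) \<or>
     (\<exists>a. I = {a<..}) \<or> (\<exists>b. I = {..<b}) \<or> I = UNIV"

text \<open>R is an o-minimal expansion of the ordered group (UNIV,<,+,0) with a distinguished
positive element 1: the language contains symbols for <, (the graph of) +, and the constant 1
(0 is \<emptyset>-definable from +), and every definable subset of M is a finite union of points and
open intervals.\<close>
definition omin_og :: "('r \<Rightarrow> ('a::linordered_ab_group_add) list set) \<Rightarrow> bool" where
  "omin_og R \<longleftrightarrow>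
     (\<exists>lt pl one c. R lt = {[x, y] | x y. x < y} \<and> R pl = {[x, y, z] | x y z. z = x + y} \<and>
        0 < c \<and> R one = {[c]}) \<and>
     (\<forall>X. L_def R UNIV 1 X \<longrightarrow>
        (\<exists>\<I>. finite \<I> \<and> (\<forall>I\<in>\<I>. is_point_or_interval I) \<and> X = (\<lambda>x. [x]) ` \<Union>\<I>))"

definition OP :: "('r \<Rightarrow> ('a::linorder) list set) \<Rightarrow> 'a set \<Rightarrow> bool" where
  "OP R P \<longleftrightarrow> (\<forall>A n V. dcl_indep R P (A - P) \<and> P_def R P A n V \<longrightarrow>
                  L_def R A n (box_closure n V))"

text \<open>Relation symbols are triples (\<phi>, k, b): an L-formula \<phi>(x_0..x_{k-1}, y) with parameters
b from D; R_\<phi> = {a \<in> P^k. M \<Turnstile> \<phi>(a,b)}. Triples not of this form get the empty relation.\<close>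
definition ind_rel :: "('r \<Rightarrow> 'a list set) \<Rightarrow> 'a set \<Rightarrow> 'a set \<Rightarrow> ('r fm \<times> nat \<times> 'a list) \<Rightarrow> 'a list set" where
  "ind_rel R P D s = (case s of (\<phi>, k, b) \<Rightarrow>
     (if set b \<subseteq> D \<and> fv \<phi> \<subseteq> {..<k + length b}
      then {a. length a = k \<and> set a \<subseteq> P \<and> sat UNIV R (\<lambda>i. (a @ b) ! i) \<phi>}
      else {}))"

definition Pind_def :: "('r \<Rightarrow> 'a list set) \<Rightarrow> 'a set \<Rightarrow> 'a set \<Rightarrow> 'a set \<Rightarrow> nat \<Rightarrow> 'a list set \<Rightarrow> bool" where
  "Pind_def R P D A n X \<longleftrightarrow> definable_in P (ind_rel R P D) A n X"

definition clD :: "('r \<Rightarrow> 'a list set) \<Rightarrow> 'a set \<Rightarrow> 'a set \<Rightarrow> 'a set \<Rightarrow> 'a set" where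
  "clD R P D A = {b \<in> P. Pind_def R P D A 1 {[b]}}"

definition ind_D :: "('r \<Rightarrow> 'a list set) \<Rightarrow> 'a set \<Rightarrow> 'a set \<Rightarrow> bool" where
  "ind_D R P D \<longleftrightarrow> (\<forall>n X. Pind_def R P D P n X \<longrightarrow>
     (\<exists>S. finite S \<and> (\<forall>(Y, Q)\<in>S. L_def R UNIV n Y \<and> Pind_def R P D {} n Q) \<and>
          X = (\<Union>(Y, Q)\<in>S. Y \<inter> Q)))"

definition pregeometry :: "'a set \<Rightarrow> ('a set \<Rightarrow> 'a set) \<Rightarrow> bool" where
  "pregeometry X cl \<longleftrightarrow>
     (\<forall>A. A \<subseteq> X \<longrightarrow> A \<subseteq> cl A \<and> cl A \<subseteq> X) \<and>
     (\<forall>A B. A \<subseteq> B \<and> B \<subseteq> X \<longrightarrow> cl A \<subseteq> cl B) \<and>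
     (\<forall>A. A \<subseteq> X \<longrightarrow> cl (cl A) = cl A) \<and>
     (\<forall>A. A \<subseteq> X \<longrightarrow> (\<forall>a\<in>cl A. \<exists>F. finite F \<and> F \<subseteq> A \<and> a \<in> cl F)) \<and>
     (\<forall>A a b. A \<subseteq> X \<and> a \<in> X \<and> b \<in> X \<and> b \<in> cl (insert a A) \<and> b \<notin> cl A \<longrightarrow>
        a \<in> cl (insert b A))"

end

theory Submission
  imports Defs
begin
lemma finite_fv: "finite (fv \<phi>)"
  by (induction \<phi>) auto

lemma sat_coincide:
  "(\<And>v. v \<in> fv \<phi> \<Longrightarrow> e v = e' v) \<Longrightarrow> sat U I e \<phi> = sat U I e' \<phi>"
proof (induction \<phi> arbitrary: e e')
  case (Eq i j)
  then show ?case by simp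
next
  case (Rel r vs)
  have eq: "map e vs = map e' vs" by (rule map_cong) (use Rel.prems in auto)
  show ?case by (simp only: sat.simps eq)
next
  case (Neg \<phi>)
  have "sat U I e \<phi> = sat U I e' \<phi>" by (rule Neg.IH) (use Neg.prems in simp)
  then show ?case by simp
next
  case (Conj \<phi>1 \<phi>2)
  have "sat U I e \<phi>1 = sat U I e' \<phi>1" by (rule Conj.IH(1)) (use Conj.prems in simp)
  moreover have "sat U I e \<phi>2 = sat U I e' \<phi>2" by (rule Conj.IH(2)) (use Conj.prems in simp)
  ultimately show ?case by simp
next
  case (Ex n \<phi>)
  have "\<And>a. sat U I (e(n := a)) \<phi> = sat U I (e'(n := a)) \<phi>"
    by (rule Ex.IH) (use Ex.prems in auto)
  then show ?case by simp
qed

lemma subst_ex: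
  "\<exists>\<psi>. fv \<psi> \<subseteq> g ` fv \<phi> \<and> (\<forall>e. sat U I e \<psi> = sat U I (e \<circ> g) \<phi>)"
proof (induction \<phi> arbitrary: g)
  case (Eq i j)
  show ?case by (rule exI[of _ "Eq (g i) (g j)"]) auto
next
  case (Rel r vs)
  show ?case by (rule exI[of _ "Rel r (map g vs)"]) (simp add: comp_def)
next
  case (Neg \<phi>)
  obtain \<psi> where \<psi>: "fv \<psi> \<subseteq> g ` fv \<phi>" "\<And>e. sat U I e \<psi> = sat U I (e \<circ> g) \<phi>"
    using Neg.IH[of g] by blast
  show ?case by (rule exI[of _ "Neg \<psi>"]) (simp add: \<psi> comp_def)
next
  case (Conj \<phi>1 \<phi>2)
  obtain \<psi>1 where 1: "fv \<psi>1 \<subseteq> g ` fv \<phi>1" "\<And>e. sat U I e \<psi>1 = sat U I (e \<circ> g) \<phi>1"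
    using Conj.IH(1)[of g] by blast
  obtain \<psi>2 where 2: "fv \<psi>2 \<subseteq> g ` fv \<phi>2" "\<And>e. sat U I e \<psi>2 = sat U I (e \<circ> g) \<phi>2"
    using Conj.IH(2)[of g] by blast
  show ?case by (rule exI[of _ "Conj \<psi>1 \<psi>2"]) (use 1 2 in \<open>auto simp: comp_def\<close>)
next
  case (Ex n \<phi>)
  obtain k where k: "k \<notin> g ` fv \<phi>"
    using ex_new_if_finite[OF infinite_UNIV_nat, of "g ` fv \<phi>"] finite_fv by blast
  obtain \<psi> where \<psi>: "fv \<psi> \<subseteq> (g(n := k)) ` fv \<phi>" "\<And>e. sat U I e \<psi> = sat U I (e \<circ> (g(n := k))) \<phi>"
    using Ex.IH[of "g(n := k)"] by blast
  have fvsub: "fv (Ex k \<psi>) \<subseteq> g ` fv (Ex n \<phi>)"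
  proof
    fix v assume "v \<in> fv (Ex k \<psi>)"
    then have "v \<in> fv \<psi>" "v \<noteq> k" by auto
    then obtain i where "i \<in> fv \<phi>" "v = (g(n := k)) i" using \<psi>(1) by blast
    then show "v \<in> g ` fv (Ex n \<phi>)" using \<open>v \<noteq> k\<close> by (cases "i = n") auto
  qed
  have "sat U I e (Ex k \<psi>) = sat U I (e \<circ> g) (Ex n \<phi>)" for e
  proof -
    have "sat U I ((e(k := a)) \<circ> (g(n := k))) \<phi> = sat U I ((e \<circ> g)(n := a)) \<phi>" for a
      by (rule sat_coincide) (use k in auto)
    then show ?thesis using \<psi>(2) by simp
  qed
  then show ?case using fvsub by blast
qed

definition DL :: "('r \<Rightarrow> 'a list set) \<Rightarrow> 'a set \<Rightarrow> nat \<Rightarrow> ('a list \<Rightarrow> bool) \<Rightarrow> bool" where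
  "DL R A n Q \<longleftrightarrow> definable_in UNIV R A n {xs. length xs = n \<and> Q xs}"

lemma DL_iff:
  "DL R A n Q \<longleftrightarrow> (\<exists>\<phi> ps. set ps \<subseteq> A \<and> fv \<phi> \<subseteq> {..<n + length ps} \<and>
      (\<forall>xs. length xs = n \<longrightarrow> (Q xs \<longleftrightarrow> sat UNIV R (\<lambda>i. (xs @ ps) ! i) \<phi>)))"
  unfolding DL_def definable_in_def
  apply (rule iffI)
   apply (elim exE conjE)
  subgoal for \<phi> ps
    apply (rule exI[of _ \<phi>], rule exI[of _ ps])
    apply (simp add: set_eq_iff)
    by blast
  apply (elim exE conjE)
  subgoal for \<phi> ps
    apply (rule exI[of _ \<phi>], rule exI[of _ ps])
    apply (simp add: set_eq_iff)
    by blast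
  done

lemma DLI:
  assumes "set ps \<subseteq> A" "fv \<phi> \<subseteq> {..<n + length ps}"
    "\<And>xs. length xs = n \<Longrightarrow> Q xs \<longleftrightarrow> sat UNIV R (\<lambda>i. (xs @ ps) ! i) \<phi>"
  shows "DL R A n Q"
  unfolding DL_iff using assms by blast

lemma DLE:
  assumes "DL R A n Q"
  obtains ps \<phi> where "set ps \<subseteq> A" "fv \<phi> \<subseteq> {..<n + length ps}"
    "\<And>xs. length xs = n \<Longrightarrow> Q xs \<longleftrightarrow> sat UNIV R (\<lambda>i. (xs @ ps) ! i) \<phi>"
proof -
  from assms obtain ps \<phi> where "set ps \<subseteq> A" "fv \<phi> \<subseteq> {..<n + length ps}"
    "\<forall>xs. length xs = n \<longrightarrow> (Q xs \<longleftrightarrow> sat UNIV R (\<lambda>i. (xs @ ps) ! i) \<phi>)"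
    unfolding DL_iff by blast
  then show ?thesis using that[of ps \<phi>] by blast
qed

lemma DL_cong:
  assumes "DL R A n Q" "\<And>xs. length xs = n \<Longrightarrow> Q xs = Q' xs"
  shows "DL R A n Q'"
proof -
  have "{xs. length xs = n \<and> Q xs} = {xs. length xs = n \<and> Q' xs}" using assms(2) by auto
  then show ?thesis using assms(1) unfolding DL_def by simp
qed

lemma DL_mono:
  assumes "DL R A n Q" "A \<subseteq> B" shows "DL R B n Q"
proof -
  obtain ps \<phi> where 1: "set ps \<subseteq> A" "fv \<phi> \<subseteq> {..<n + length ps}"
    "\<And>xs. length xs = n \<Longrightarrow> Q xs \<longleftrightarrow> sat UNIV R (\<lambda>i. (xs @ ps) ! i) \<phi>"
    using assms(1) by (rule DLE) (rule that; assumption)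
  show ?thesis by (rule DLI[where ps="ps" and \<phi>="\<phi>"]) (use 1 assms(2) in auto)
qed

lemma DL_conj:
  fixes R :: "'r \<Rightarrow> 'a list set"
  assumes "DL R A n Q1" "DL R A n Q2"
  shows "DL R A n (\<lambda>xs. Q1 xs \<and> Q2 xs)"
proof -
  obtain ps1 \<phi>1 where 1: "set ps1 \<subseteq> A" "fv \<phi>1 \<subseteq> {..<n + length ps1}"
    "\<And>xs. length xs = n \<Longrightarrow> Q1 xs \<longleftrightarrow> sat UNIV R (\<lambda>i. (xs @ ps1) ! i) \<phi>1"
    using assms(1) by (rule DLE) (rule that; assumption)
  obtain ps2 \<phi>2 where 2: "set ps2 \<subseteq> A" "fv \<phi>2 \<subseteq> {..<n + length ps2}"
    "\<And>xs. length xs = n \<Longrightarrow> Q2 xs \<longleftrightarrow> sat UNIV R (\<lambda>i. (xs @ ps2) ! i) \<phi>2"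
    using assms(2) by (rule DLE) (rule that; assumption)
  define g where "g = (\<lambda>i::nat. if i < n then i else i + length ps1)"
  obtain \<psi> where \<psi>: "fv \<psi> \<subseteq> g ` fv \<phi>2" "\<forall>e. sat UNIV R e \<psi> = sat UNIV R (e \<circ> g) \<phi>2"
    using subst_ex by blast
  show ?thesis
  proof (rule DLI[where ps="ps1 @ ps2" and \<phi>="Conj \<phi>1 \<psi>"])
    show "set (ps1 @ ps2) \<subseteq> A" using 1 2 by auto
    show "fv (Conj \<phi>1 \<psi>) \<subseteq> {..<n + length (ps1 @ ps2)}"
      using 1(2) 2(2) \<psi>(1) by (force simp: g_def)
    fix xs :: "'a list" assume len: "length xs = n"
    have a: "sat UNIV R (\<lambda>i. (xs @ ps1 @ ps2) ! i) \<phi>1 = sat UNIV R (\<lambda>i. (xs @ ps1) ! i) \<phi>1"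
    proof (rule sat_coincide)
      fix v assume "v \<in> fv \<phi>1"
      then have "v < length (xs @ ps1)" using 1(2) len by auto
      then show "(xs @ ps1 @ ps2) ! v = (xs @ ps1) ! v"
        by (metis append_assoc nth_append)
    qed
    have b: "sat UNIV R ((\<lambda>i. (xs @ ps1 @ ps2) ! i) \<circ> g) \<phi>2 = sat UNIV R (\<lambda>i. (xs @ ps2) ! i) \<phi>2"
    proof (rule sat_coincide)
      fix v assume "v \<in> fv \<phi>2"
      then have "v < n + length ps2" using 2(2) by auto
      then show "((\<lambda>i. (xs @ ps1 @ ps2) ! i) \<circ> g) v = (xs @ ps2) ! v"
        using len by (auto simp: g_def nth_append)
    qed
    show "(Q1 xs \<and> Q2 xs) = sat UNIV R (\<lambda>i. (xs @ ps1 @ ps2) ! i) (Conj \<phi>1 \<psi>)"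
      using a b 1(3)[OF len] 2(3)[OF len] \<psi>(2) by simp
  qed
qed

lemma DL_neg:
  assumes "DL R A n Q"
  shows "DL R A n (\<lambda>xs. \<not> Q xs)"
proof -
  obtain ps \<phi> where 1: "set ps \<subseteq> A" "fv \<phi> \<subseteq> {..<n + length ps}"
    "\<And>xs. length xs = n \<Longrightarrow> Q xs \<longleftrightarrow> sat UNIV R (\<lambda>i. (xs @ ps) ! i) \<phi>"
    using assms by (rule DLE) (rule that; assumption)
  show ?thesis by (rule DLI[where ps="ps" and \<phi>="Neg \<phi>"]) (use 1 in auto)
qed

lemma DL_disj:
  assumes "DL R A n Q1" "DL R A n Q2"
  shows "DL R A n (\<lambda>xs. Q1 xs \<or> Q2 xs)"
  using DL_neg[OF DL_conj[OF DL_neg[OF assms(1)] DL_neg[OF assms(2)]]] by simp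

lemma DL_imp:
  assumes "DL R A n Q1" "DL R A n Q2"
  shows "DL R A n (\<lambda>xs. Q1 xs \<longrightarrow> Q2 xs)"
  using DL_disj[OF DL_neg[OF assms(1)] assms(2)] by simp

lemma DL_iff2:
  assumes "DL R A n Q1" "DL R A n Q2"
  shows "DL R A n (\<lambda>xs. Q1 xs \<longleftrightarrow> Q2 xs)"
  using DL_conj[OF DL_imp[OF assms] DL_imp[OF assms(2,1)]] by (simp add: iff_conv_conj_imp)

lemma DL_ex_last:
  fixes R :: "'r \<Rightarrow> 'a list set"
  assumes "DL R A (Suc n) Q"
  shows "DL R A n (\<lambda>xs. \<exists>a. Q (xs @ [a]))"
proof -
  obtain ps \<phi> where 1: "set ps \<subseteq> A" "fv \<phi> \<subseteq> {..<Suc n + length ps}"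
    "\<And>xs. length xs = Suc n \<Longrightarrow> Q xs \<longleftrightarrow> sat UNIV R (\<lambda>i. (xs @ ps) ! i) \<phi>"
    using assms by (rule DLE) (rule that; assumption)
  define k where "k = n + length ps"
  define g where "g = (\<lambda>i::nat. if i < n then i else if i = n then k else i - 1)"
  obtain \<psi> where \<psi>: "fv \<psi> \<subseteq> g ` fv \<phi>" "\<forall>e. sat UNIV R e \<psi> = sat UNIV R (e \<circ> g) \<phi>"
    using subst_ex by blast
  show ?thesis
  proof (rule DLI[where ps="ps" and \<phi>="Ex k \<psi>"])
    show "set ps \<subseteq> A" by fact
    show "fv (Ex k \<psi>) \<subseteq> {..<n + length ps}"
    proof
      fix v assume "v \<in> fv (Ex k \<psi>)"
      then have "v \<in> fv \<psi>" "v \<noteq> k" by auto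
      then obtain i where "i \<in> fv \<phi>" "v = g i" using \<psi>(1) by blast
      then show "v \<in> {..<n + length ps}" using 1(2) \<open>v \<noteq> k\<close> by (auto simp: g_def k_def split: if_splits)
    qed
    fix xs :: "'a list" assume len: "length xs = n"
    have c: "sat UNIV R (((\<lambda>i. (xs @ ps) ! i)(k := a)) \<circ> g) \<phi> = sat UNIV R (\<lambda>i. ((xs @ [a]) @ ps) ! i) \<phi>" for a
    proof (rule sat_coincide)
      fix v assume "v \<in> fv \<phi>"
      then have "v < Suc n + length ps" using 1(2) by auto
      then show "(((\<lambda>i. (xs @ ps) ! i)(k := a)) \<circ> g) v = ((xs @ [a]) @ ps) ! v"
        using len by (auto simp: g_def k_def nth_append)
    qed
    show "(\<exists>a. Q (xs @ [a])) = sat UNIV R (\<lambda>i. (xs @ ps) ! i) (Ex k \<psi>)"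
      using 1(3)[of "xs @ [_]"] len c \<psi>(2) by simp
  qed
qed

lemma DL_all_last:
  assumes "DL R A (Suc n) Q"
  shows "DL R A n (\<lambda>xs. \<forall>a. Q (xs @ [a]))"
  using DL_neg[OF DL_ex_last[OF DL_neg[OF assms]]] by simp

lemma DL_pre:
  fixes R :: "'r \<Rightarrow> 'a list set"
  assumes "DL R A m Q" "length \<sigma> = m" "\<forall>j\<in>set \<sigma>. j < n"
  shows "DL R A n (\<lambda>xs. Q (map (\<lambda>j. xs ! j) \<sigma>))"
proof -
  obtain ps \<phi> where 1: "set ps \<subseteq> A" "fv \<phi> \<subseteq> {..<m + length ps}"
    "\<And>xs. length xs = m \<Longrightarrow> Q xs \<longleftrightarrow> sat UNIV R (\<lambda>i. (xs @ ps) ! i) \<phi>"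
    using assms(1) by (rule DLE) (rule that; assumption)
  define g where "g = (\<lambda>i::nat. if i < m then \<sigma> ! i else n + (i - m))"
  obtain \<psi> where \<psi>: "fv \<psi> \<subseteq> g ` fv \<phi>" "\<forall>e. sat UNIV R e \<psi> = sat UNIV R (e \<circ> g) \<phi>"
    using subst_ex by blast
  show ?thesis
  proof (rule DLI[where ps="ps" and \<phi>="\<psi>"])
    show "set ps \<subseteq> A" by fact
    show "fv \<psi> \<subseteq> {..<n + length ps}"
    proof
      fix v assume "v \<in> fv \<psi>"
      then obtain i where "i \<in> fv \<phi>" "v = g i" using \<psi>(1) by blast
      then show "v \<in> {..<n + length ps}" using 1(2) assms(2,3) nth_mem[of _ \<sigma>]
        by (fastforce simp: g_def split: if_splits)
    qed
    fix xs :: "'a list" assume len: "length xs = n"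
    have c: "sat UNIV R ((\<lambda>i. (xs @ ps) ! i) \<circ> g) \<phi> = sat UNIV R (\<lambda>i. (map (\<lambda>j. xs ! j) \<sigma> @ ps) ! i) \<phi>"
    proof (rule sat_coincide)
      fix v assume "v \<in> fv \<phi>"
      then have "v < m + length ps" using 1(2) by auto
      then show "((\<lambda>i. (xs @ ps) ! i) \<circ> g) v = (map (\<lambda>j. xs ! j) \<sigma> @ ps) ! v"
        using len assms(2,3) by (auto simp: g_def nth_append)
    qed
    show "Q (map (\<lambda>j. xs ! j) \<sigma>) = sat UNIV R (\<lambda>i. (xs @ ps) ! i) \<psi>"
      using 1(3)[of "map (\<lambda>j. xs ! j) \<sigma>"] assms(2) c \<psi>(2) by simp
  qed
qed

lemma DL_rel:
  assumes "\<forall>j\<in>set vs. j < n"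
  shows "DL R A n (\<lambda>xs. map (\<lambda>j. xs ! j) vs \<in> R r)"
  by (rule DLI[where ps="[]" and \<phi>="Rel r vs"]) (use assms in auto)

lemma DL_eq:
  assumes "i < n" "j < n"
  shows "DL R A n (\<lambda>xs. xs ! i = xs ! j)"
  by (rule DLI[where ps="[]" and \<phi>="Eq i j"]) (use assms in auto)

lemma DL_const:
  assumes "i < n" "p \<in> A"
  shows "DL R A n (\<lambda>xs. xs ! i = p)"
  by (rule DLI[where ps="[p]" and \<phi>="Eq i n"]) (use assms in \<open>auto simp: nth_append\<close>)

lemma DL_true: "DL R A n (\<lambda>xs. True)"
  by (rule DLI[where ps="[]" and \<phi>="Ex 0 (Eq 0 0)"]) auto

lemma DL_false: "DL R A n (\<lambda>xs. False)"
  using DL_neg[OF DL_true] by simp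

lemma DL_param:
  assumes "DL R A (n + length ps) Q" "set ps \<subseteq> A"
  shows "DL R A n (\<lambda>xs. Q (xs @ ps))"
proof -
  obtain qs \<phi> where 1: "set qs \<subseteq> A" "fv \<phi> \<subseteq> {..<(n + length ps) + length qs}"
    "\<And>xs. length xs = n + length ps \<Longrightarrow> Q xs \<longleftrightarrow> sat UNIV R (\<lambda>i. (xs @ qs) ! i) \<phi>"
    using assms(1) by (rule DLE) (rule that; assumption)
  show ?thesis
    by (rule DLI[where ps="ps @ qs" and \<phi>="\<phi>"]) (use 1 assms(2) in auto)
qed

lemma DL_ball:
  fixes k :: nat
  assumes "\<And>i. i < k \<Longrightarrow> DL R A n (Q i)"
  shows "DL R A n (\<lambda>xs. \<forall>i<k. Q i xs)"
  using assms
proof (induction k)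
  case 0
  then show ?case using DL_true by simp
next
  case (Suc k)
  have "DL R A n (\<lambda>xs. (\<forall>i<k. Q i xs) \<and> Q k xs)"
    using Suc by (intro DL_conj) auto
  then show ?case by (rule DL_cong) (auto simp: less_Suc_eq)
qed

lemma DL_ex_multi:
  fixes R :: "'r \<Rightarrow> 'a list set" and k :: nat
  assumes "DL R A (n + k) Q"
  shows "DL R A n (\<lambda>xs. \<exists>ys. length ys = k \<and> Q (xs @ ys))"
  using assms
proof (induction k arbitrary: Q)
  case 0
  then have "DL R A n Q" by simp
  then show ?case by (rule DL_cong) auto
next
  case (Suc k)
  have "DL R A (n + k) (\<lambda>zs. \<exists>a. Q (zs @ [a]))"
    using DL_ex_last[of R A "n + k" Q] Suc.prems by simp
  then have "DL R A n (\<lambda>xs. \<exists>ys. length ys = k \<and> (\<exists>a. Q ((xs @ ys) @ [a])))"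
    using Suc.IH by blast
  then show ?case
  proof (rule DL_cong)
    fix xs :: "'a list"
    show "(\<exists>ys. length ys = k \<and> (\<exists>a. Q ((xs @ ys) @ [a]))) = (\<exists>ys. length ys = Suc k \<and> Q (xs @ ys))"
    proof
      assume "\<exists>ys. length ys = k \<and> (\<exists>a. Q ((xs @ ys) @ [a]))"
      then obtain ys a where "length ys = k" "Q ((xs @ ys) @ [a])" by blast
      then show "\<exists>ys. length ys = Suc k \<and> Q (xs @ ys)"
        by (intro exI[of _ "ys @ [a]"]) auto
    next
      assume "\<exists>ys. length ys = Suc k \<and> Q (xs @ ys)"
      then obtain ys where ys: "length ys = Suc k" "Q (xs @ ys)" by blast
      then obtain zs a where "ys = zs @ [a]" by (metis length_Suc_conv_rev)
      then show "\<exists>ys. length ys = k \<and> (\<exists>a. Q ((xs @ ys) @ [a]))" using ys by auto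
    qed
  qed
qed

lemma DF_imp_DL:
  assumes "definable_in UNIV R A n X"
  shows "DL R A n (\<lambda>xs. xs \<in> X)"
proof -
  have "X = {xs. length xs = n \<and> xs \<in> X}"
    using assms unfolding definable_in_def by auto
  then show ?thesis using assms unfolding DL_def by simp
qed

lemma DL_imp_DF:
  assumes "DL R A n Q"
  shows "definable_in UNIV R A n {xs. length xs = n \<and> Q xs}"
  using assms unfolding DL_def by simp

lemma fv_map_fm: "fv (map_fm f \<phi>) = fv \<phi>"
  by (induction \<phi>) auto

lemma sat_map_fm_Some: "sat UNIV (exp_rel R P) e (map_fm Some \<phi>) = sat UNIV R e \<phi>"
  by (induction \<phi> arbitrary: e) (auto simp: exp_rel_def)

lemma DL_embed:
  assumes "DL R A n Q"
  shows "DL (exp_rel R P) A n Q"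
proof -
  obtain ps \<phi> where 1: "set ps \<subseteq> A" "fv \<phi> \<subseteq> {..<n + length ps}"
    "\<And>xs. length xs = n \<Longrightarrow> Q xs \<longleftrightarrow> sat UNIV R (\<lambda>i. (xs @ ps) ! i) \<phi>"
    using assms by (rule DLE) (rule that; assumption)
  show ?thesis
    by (rule DLI[where ps="ps" and \<phi>="map_fm Some \<phi>"]) (use 1 in \<open>auto simp: fv_map_fm sat_map_fm_Some\<close>)
qed

lemma len1_conv: "length xs = Suc 0 \<longleftrightarrow> (\<exists>x. xs = [x])"
  by (auto simp: length_Suc_conv)

lemma singleton_set_eq: "{[b]} = {xs. length xs = 1 \<and> xs ! 0 = b}"
  by (auto simp: len1_conv)

lemma dcl_iff: "b \<in> dcl R A \<longleftrightarrow> DL R A 1 (\<lambda>xs. xs ! 0 = b)"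
  unfolding dcl_def L_def_def DL_def by (simp add: singleton_set_eq)

lemma dcl_refl: "a \<in> A \<Longrightarrow> a \<in> dcl R A"
  unfolding dcl_iff by (rule DL_const) auto

lemma dcl_mono: "A \<subseteq> B \<Longrightarrow> dcl R A \<subseteq> dcl R B"
  by (auto simp: dcl_iff intro: DL_mono)

lemma DL_finite_params:
  assumes "DL R A n Q"
  shows "\<exists>F. finite F \<and> F \<subseteq> A \<and> DL R F n Q"
proof -
  obtain ps \<phi> where 1: "set ps \<subseteq> A" "fv \<phi> \<subseteq> {..<n + length ps}"
    "\<And>xs. length xs = n \<Longrightarrow> Q xs \<longleftrightarrow> sat UNIV R (\<lambda>i. (xs @ ps) ! i) \<phi>"
    using assms by (rule DLE) (rule that; assumption)
  have "DL R (set ps) n Q" by (rule DLI[where ps="ps" and \<phi>="\<phi>"]) (use 1 in auto)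
  then show ?thesis using 1(1) by blast
qed

lemma DL_if:
  "(P \<Longrightarrow> DL R A n Q1) \<Longrightarrow> (\<not> P \<Longrightarrow> DL R A n Q2) \<Longrightarrow> DL R A n (\<lambda>xs. if P then Q1 xs else Q2 xs)"
  by (cases P) auto

lemma map_nth_sigma:
  assumes "length xs = n" "length ws = k"
  shows "map (\<lambda>j. (xs @ [x] @ ws) ! j) ([0..<n] @ map (\<lambda>j. Suc n + j) [0..<k]) = xs @ ws"
  by (rule nth_equalityI) (use assms in \<open>auto simp: nth_append\<close>)

lemma DL_abstract:
  assumes "DL R (insert a C) n Q"
  shows "\<exists>Z. DL R C (Suc n) Z \<and> (\<forall>xs. length xs = n \<longrightarrow> Q xs = Z (xs @ [a]))"
proof -
  obtain ps \<phi> where 1: "set ps \<subseteq> insert a C" "fv \<phi> \<subseteq> {..<n + length ps}"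
    "\<And>xs. length xs = n \<Longrightarrow> Q xs \<longleftrightarrow> sat UNIV R (\<lambda>i. (xs @ ps) ! i) \<phi>"
    using assms by (rule DLE) (rule that; assumption)
  define k where "k = length ps"
  define Y where "Y = (\<lambda>zs. sat UNIV R (\<lambda>i. zs ! i) \<phi>)"
  have Y: "DL R C (n + k) Y"
    by (rule DLI[where ps="[]" and \<phi>="\<phi>"]) (use 1 in \<open>auto simp: Y_def k_def\<close>)
  define \<sigma> where "\<sigma> = [0..<n] @ map (\<lambda>j. Suc n + j) [0..<k]"
  define W where "W = (\<lambda>us. Y (map (\<lambda>j. us ! j) \<sigma>) \<and>
      (\<forall>j<k. if ps ! j = a then us ! (Suc n + j) = us ! n else us ! (Suc n + j) = ps ! j))"
  have W: "DL R C (Suc n + k) W"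
    unfolding W_def
  proof (rule DL_conj)
    show "DL R C (Suc n + k) (\<lambda>us. Y (map (\<lambda>j. us ! j) \<sigma>))"
      by (rule DL_pre[OF Y]) (auto simp: \<sigma>_def)
    show "DL R C (Suc n + k) (\<lambda>xs. \<forall>j<k. if ps ! j = a then xs ! (Suc n + j) = xs ! n else xs ! (Suc n + j) = ps ! j)"
    proof (rule DL_ball, rule DL_if)
      fix j assume "j < k"
      show "DL R C (Suc n + k) (\<lambda>xs. xs ! (Suc n + j) = xs ! n)" by (rule DL_eq) (use \<open>j < k\<close> in auto)
      assume "ps ! j \<noteq> a"
      then have "ps ! j \<in> C" using 1(1) \<open>j < k\<close> k_def nth_mem by fastforce
      then show "DL R C (Suc n + k) (\<lambda>xs. xs ! (Suc n + j) = ps ! j)" by (rule DL_const[rotated]) (use \<open>j < k\<close> in auto)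
    qed
  qed
  define Z where "Z = (\<lambda>zs. \<exists>ws. length ws = k \<and> W (zs @ ws))"
  have "DL R C (Suc n) Z" unfolding Z_def by (rule DL_ex_multi) (use W in simp)
  moreover have "Q xs = Z (xs @ [a])" if len: "length xs = n" for xs
  proof -
    have "Z (xs @ [a]) \<longleftrightarrow> (\<exists>ws. length ws = k \<and> Y (xs @ ws) \<and> (\<forall>j<k. ws ! j = ps ! j))"
    proof -
      have "W ((xs @ [a]) @ ws) \<longleftrightarrow> Y (xs @ ws) \<and> (\<forall>j<k. ws ! j = ps ! j)" if lw: "length ws = k" for ws
      proof -
        have e1: "map (\<lambda>j. ((xs @ [a]) @ ws) ! j) \<sigma> = xs @ ws"
          using map_nth_sigma[OF len lw, of a] by (simp add: \<sigma>_def)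
        have e2: "((xs @ [a]) @ ws) ! (Suc n + j) = ws ! j" for j using len by (simp add: nth_append)
        have e3: "((xs @ [a]) @ ws) ! n = a" using len by (simp add: nth_append)
        have e4: "(if ps ! j = a then ws ! j = a else ws ! j = ps ! j) \<longleftrightarrow> ws ! j = ps ! j" for j
          by auto
        show ?thesis unfolding W_def e1 e2 e3 e4 by (rule refl)
      qed
      then show ?thesis unfolding Z_def by auto
    qed
    also have "\<dots> \<longleftrightarrow> Y (xs @ ps)"
    proof
      assume "\<exists>ws. length ws = k \<and> Y (xs @ ws) \<and> (\<forall>j<k. ws ! j = ps ! j)"
      then obtain ws where "length ws = k" "Y (xs @ ws)" "\<forall>j<k. ws ! j = ps ! j" by blast
      moreover then have "ws = ps" by (intro nth_equalityI) (auto simp: k_def)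
      ultimately show "Y (xs @ ps)" by simp
    qed (auto simp: k_def)
    also have "\<dots> \<longleftrightarrow> Q xs" using 1(3)[OF len] by (simp add: Y_def)
    finally show ?thesis by simp
  qed
  ultimately show ?thesis by blast
qed

lemma dcl_trans1:
  assumes "c \<in> dcl R C" "DL R (insert c C) n Q"
  shows "DL R C n Q"
proof -
  obtain Z where Z: "DL R C (Suc n) Z" "\<forall>xs. length xs = n \<longrightarrow> Q xs = Z (xs @ [c])"
    using DL_abstract[OF assms(2)] by blast
  have c: "DL R C 1 (\<lambda>xs. xs ! 0 = c)" using assms(1) dcl_iff by metis
  have "DL R C (Suc n) (\<lambda>us. map (\<lambda>j. us ! j) [n] ! 0 = c)"
    by (rule DL_pre[OF c]) auto
  then have "DL R C (Suc n) (\<lambda>us. us ! n = c \<and> Z us)"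
    using Z(1) by (intro DL_conj) auto
  then have "DL R C n (\<lambda>xs. \<exists>z. (xs @ [z]) ! n = c \<and> Z (xs @ [z]))"
    by (rule DL_ex_last)
  then show ?thesis
    by (rule DL_cong) (use Z(2) in \<open>auto simp: nth_append\<close>)
qed

lemma dcl_trans_fin:
  assumes "finite F" "F \<subseteq> dcl R C" "DL R (F \<union> C) n Q"
  shows "DL R C n Q"
  using assms
proof (induction F arbitrary: Q rule: finite_induct)
  case empty
  then show ?case by simp
next
  case (insert x F)
  have "x \<in> dcl R (F \<union> C)" using insert.prems(1) dcl_mono[of C "F \<union> C" R] by auto
  moreover have "DL R (insert x (F \<union> C)) n Q" using insert.prems(2) by simp
  ultimately have 1: "DL R (F \<union> C) n Q" by (rule dcl_trans1)
  have 2: "F \<subseteq> dcl R C" using insert.prems(1) by simp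
  show ?case by (rule insert.IH[OF 2 1])
qed

lemma DL_dcl_params:
  assumes "DL R A n Q" "A \<subseteq> dcl R C"
  shows "DL R C n Q"
proof -
  obtain F where F: "finite F" "F \<subseteq> A" "DL R F n Q" using DL_finite_params[OF assms(1)] by blast
  have "DL R (F \<union> C) n Q" using F(3) DL_mono by blast
  moreover have "F \<subseteq> dcl R C" using F(2) assms(2) by simp
  ultimately show ?thesis by (rule dcl_trans_fin[OF F(1), rotated])
qed

lemma dcl_sub:
  assumes "A \<subseteq> dcl R C" shows "dcl R A \<subseteq> dcl R C"
proof
  fix b assume "b \<in> dcl R A"
  then have "DL R A 1 (\<lambda>xs. xs ! 0 = b)" by (simp add: dcl_iff)
  then have "DL R C 1 (\<lambda>xs. xs ! 0 = b)" using assms by (rule DL_dcl_params)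
  then show "b \<in> dcl R C" by (simp add: dcl_iff)
qed

lemma DL_abstract_fin:
  assumes "finite F" "DL R (F \<union> C) n Q"
  shows "\<exists>qs Z. set qs \<subseteq> F \<and> DL R C (n + length qs) Z \<and> (\<forall>xs. length xs = n \<longrightarrow> Q xs = Z (xs @ qs))"
  using assms
proof (induction F arbitrary: n Q rule: finite_induct)
  case empty
  then show ?case by (intro exI[of _ "[]"] exI[of _ Q]) auto
next
  case (insert x F)
  have "DL R (insert x (F \<union> C)) n Q" using insert.prems by simp
  then have "\<exists>Z. DL R (F \<union> C) (Suc n) Z \<and> (\<forall>xs. length xs = n \<longrightarrow> Q xs = Z (xs @ [x]))"
    by (rule DL_abstract)
  then obtain Z1 where Z1: "DL R (F \<union> C) (Suc n) Z1" "\<forall>xs. length xs = n \<longrightarrow> Q xs = Z1 (xs @ [x])"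
    by blast
  have "\<exists>qs Z. set qs \<subseteq> F \<and> DL R C (Suc n + length qs) Z \<and> (\<forall>xs. length xs = Suc n \<longrightarrow> Z1 xs = Z (xs @ qs))"
    by (rule insert.IH[OF Z1(1)])
  then obtain qs Z where Z: "set qs \<subseteq> F" "DL R C (Suc n + length qs) Z"
    "\<forall>xs. length xs = Suc n \<longrightarrow> Z1 xs = Z (xs @ qs)"
    by blast
  have a: "set (x # qs) \<subseteq> insert x F" using Z(1) by auto
  have b: "DL R C (n + length (x # qs)) Z" using Z(2) by simp
  have c: "\<forall>xs. length xs = n \<longrightarrow> Q xs = Z (xs @ (x # qs))"
  proof (intro allI impI)
    fix xs :: "'a list" assume len: "length xs = n"
    then have "Q xs = Z1 (xs @ [x])" using Z1(2) by blast
    also have "\<dots> = Z ((xs @ [x]) @ qs)" using Z(3) len by simp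
    finally show "Q xs = Z (xs @ (x # qs))" by simp
  qed
  show ?case by (intro exI[of _ "x # qs"] exI[of _ Z] conjI a b c)
qed

lemma DL_inP:
  fixes R :: "'r \<Rightarrow> 'a list set"
  shows "DL (exp_rel R P) A m (\<lambda>xs. set xs \<subseteq> P)"
proof -
  have "DL (exp_rel R P) A m (\<lambda>xs. \<forall>i<m. map (\<lambda>j. xs ! j) [i] \<in> exp_rel R P None)"
    by (rule DL_ball, rule DL_rel) auto
  then show ?thesis
  proof (rule DL_cong)
    fix xs :: "'a list" assume "length xs = m"
    then show "(\<forall>i<m. map (\<lambda>j. xs ! j) [i] \<in> exp_rel R P None) = (set xs \<subseteq> P)"
      by (auto simp: exp_rel_def in_set_conv_nth) (metis nth_mem subsetD)
  qed
qed

lemma DP_disjoint: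
  assumes "dcl_indep R P D"
  shows "D \<inter> P = {}"
proof (rule ccontr)
  assume "D \<inter> P \<noteq> {}"
  then obtain d where d: "d \<in> D" "d \<in> P" by blast
  then have "d \<in> dcl R ((D - {d}) \<union> P)" by (intro dcl_refl) auto
  then show False using assms d unfolding dcl_indep_def by blast
qed

lemma ind_sat:
  fixes R :: "'r \<Rightarrow> 'a list set"
  assumes "fv \<psi> \<subseteq> {..<m}"
  shows "DL (exp_rel R P) D m (\<lambda>xs. set xs \<subseteq> P \<and> sat P (ind_rel R P D) (\<lambda>i. xs ! i) \<psi>)"
  using assms
proof (induction \<psi> arbitrary: m)
  case (Eq i j)
  have "DL (exp_rel R P) D m (\<lambda>xs. set xs \<subseteq> P \<and> xs ! i = xs ! j)"
    using Eq.prems by (intro DL_conj DL_inP DL_eq) auto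
  then show ?case by simp
next
  case (Rel s vs)
  obtain \<phi> kk d where s: "s = (\<phi>, kk, d)" by (cases s) auto
  have vs: "\<forall>j\<in>set vs. j < m" using Rel.prems by auto
  show ?case
  proof (cases "set d \<subseteq> D \<and> fv \<phi> \<subseteq> {..<kk + length d} \<and> length vs = kk")
    case True
    define T where "T = (\<lambda>a. sat UNIV R (\<lambda>i. (a @ d) ! i) \<phi>)"
    have "DL R D kk T"
      by (rule DLI[where ps=d and \<phi>=\<phi>]) (use True in \<open>auto simp: T_def\<close>)
    then have "DL (exp_rel R P) D kk T" by (rule DL_embed)
    then have "DL (exp_rel R P) D m (\<lambda>xs. T (map (\<lambda>j. xs ! j) vs))"
      by (rule DL_pre) (use True vs in auto)
    then have "DL (exp_rel R P) D m (\<lambda>xs. set xs \<subseteq> P \<and> T (map (\<lambda>j. xs ! j) vs))"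
      by (intro DL_conj DL_inP)
    then show ?thesis
    proof (rule DL_cong)
      fix xs :: "'a list" assume len: "length xs = m"
      show "(set xs \<subseteq> P \<and> T (map (\<lambda>j. xs ! j) vs)) =
            (set xs \<subseteq> P \<and> sat P (ind_rel R P D) (\<lambda>i. xs ! i) (Rel s vs))"
      proof (cases "set xs \<subseteq> P")
        case True2: True
        have "set (map (\<lambda>j. xs ! j) vs) \<subseteq> P" using True2 vs len by auto
        then show ?thesis using True True2 by (simp add: s ind_rel_def T_def)
      qed simp
    qed
  next
    case False
    have "DL (exp_rel R P) D m (\<lambda>xs. set xs \<subseteq> P \<and> False)"
      by (intro DL_conj DL_inP DL_false)
    then show ?thesis
      by (rule DL_cong) (use False in \<open>auto simp: s ind_rel_def\<close>)
  qed
next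
  case (Neg \<psi>)
  have "DL (exp_rel R P) D m (\<lambda>xs. set xs \<subseteq> P \<and> \<not> (set xs \<subseteq> P \<and> sat P (ind_rel R P D) (\<lambda>i. xs ! i) \<psi>))"
    using Neg.prems by (intro DL_conj[OF DL_inP DL_neg[OF Neg.IH]]) simp
  then show ?case by (rule DL_cong) auto
next
  case (Conj \<psi>1 \<psi>2)
  have "DL (exp_rel R P) D m (\<lambda>xs. (set xs \<subseteq> P \<and> sat P (ind_rel R P D) (\<lambda>i. xs ! i) \<psi>1) \<and>
                                   (set xs \<subseteq> P \<and> sat P (ind_rel R P D) (\<lambda>i. xs ! i) \<psi>2))"
    using Conj.prems by (intro DL_conj[OF Conj.IH(1) Conj.IH(2)]) simp_all
  then show ?case by (rule DL_cong) auto
next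
  case (Ex k \<psi>)
  define m' where "m' = max m (Suc k)"
  have fvm: "fv \<psi> \<subseteq> {..<m'}" using Ex.prems by (auto simp: m'_def)
  have fvk: "\<And>v. v \<in> fv \<psi> \<Longrightarrow> v = k \<or> v < m" using Ex.prems by auto
  define S where "S = (\<lambda>xs. set xs \<subseteq> P \<and> sat P (ind_rel R P D) (\<lambda>i. xs ! i) \<psi>)"
  have S: "DL (exp_rel R P) D m' S" unfolding S_def by (rule Ex.IH[OF fvm])
  define \<sigma> where "\<sigma> = map (\<lambda>j. if j < m \<and> j \<noteq> k then j else m) [0..<m']"
  have "DL (exp_rel R P) D (Suc m) (\<lambda>us. S (map (\<lambda>j. us ! j) \<sigma>))"
    by (rule DL_pre[OF S]) (auto simp: \<sigma>_def)
  then have "DL (exp_rel R P) D m (\<lambda>xs. \<exists>a. S (map (\<lambda>j. (xs @ [a]) ! j) \<sigma>))"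
    by (rule DL_ex_last)
  then have "DL (exp_rel R P) D m (\<lambda>xs. set xs \<subseteq> P \<and> (\<exists>a. S (map (\<lambda>j. (xs @ [a]) ! j) \<sigma>)))"
    by (intro DL_conj DL_inP)
  then show ?case
  proof (rule DL_cong)
    fix xs :: "'a list" assume len: "length xs = m"
    define L where "L = (\<lambda>a. map (\<lambda>j. (xs @ [a]) ! j) \<sigma>)"
    have lenL: "length (L a) = m'" for a by (simp add: L_def \<sigma>_def)
    have nthL: "j < m' \<Longrightarrow> L a ! j = (if j < m \<and> j \<noteq> k then xs ! j else a)" for a j
      using len by (simp add: L_def \<sigma>_def nth_append)
    have km': "k < m'" by (simp add: m'_def)
    have satL: "sat P (ind_rel R P D) (\<lambda>i. L a ! i) \<psi> = sat P (ind_rel R P D) ((\<lambda>i. xs ! i)(k := a)) \<psi>" for a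
    proof (rule sat_coincide)
      fix v assume v: "v \<in> fv \<psi>"
      then have "v < m'" using fvm by auto
      then show "L a ! v = ((\<lambda>i. xs ! i)(k := a)) v" using nthL fvk[OF v] by auto
    qed
    have setL: "set (L a) \<subseteq> P \<longleftrightarrow> a \<in> P" if "set xs \<subseteq> P" for a
    proof
      assume "set (L a) \<subseteq> P"
      moreover have "L a ! k = a" using nthL km' by simp
      ultimately show "a \<in> P" using km' lenL by (metis nth_mem subsetD)
    next
      assume a: "a \<in> P"
      show "set (L a) \<subseteq> P"
      proof
        fix y assume "y \<in> set (L a)"
        then obtain j where j: "j < m'" "y = L a ! j" using lenL by (metis in_set_conv_nth)
        show "y \<in> P" using j nthL that a len by (auto simp: nth_mem subsetD)
      qed
    qed
    show "(set xs \<subseteq> P \<and> (\<exists>a. S (map (\<lambda>j. (xs @ [a]) ! j) \<sigma>))) =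
          (set xs \<subseteq> P \<and> sat P (ind_rel R P D) (\<lambda>i. xs ! i) (Ex k \<psi>))"
    proof (cases "set xs \<subseteq> P")
      case True
      have "(\<exists>a. S (L a)) \<longleftrightarrow> (\<exists>a\<in>P. sat P (ind_rel R P D) ((\<lambda>i. xs ! i)(k := a)) \<psi>)"
        unfolding S_def using setL[OF True] satL by auto
      then show ?thesis using True by (simp add: L_def)
    qed simp
  qed
qed

lemma all_less_one: "(\<forall>i<(1::nat). Q i) \<longleftrightarrow> Q 0"
  by auto

lemma box_closure_single:
  fixes b c :: "'a::linordered_ab_group_add"
  assumes c: "0 < c"
  shows "box_closure 1 {[b]} = {[b]}"
proof
  show "{[b]} \<subseteq> box_closure 1 {[b]}"
    unfolding box_closure_def by auto
  show "box_closure 1 {[b]} \<subseteq> {[b]}"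
  proof
    fix x assume x: "x \<in> box_closure 1 {[b]}"
    then have lx: "length x = 1" unfolding box_closure_def by simp
    then obtain y where y: "x = [y]" by (auto simp: len1_conv)
    have H: "\<And>p q. p < y \<Longrightarrow> y < q \<Longrightarrow> p < b \<and> b < q"
    proof -
      fix p q assume "p < y" "y < q"
      then have "length [p] = 1 \<and> length [q] = 1 \<and> (\<forall>i<1. [p] ! i < x ! i \<and> x ! i < [q] ! i)"
        using y by (simp add: all_less_one)
      then have "\<exists>v\<in>{[b]}. length v = 1 \<and> (\<forall>i<1. [p] ! i < v ! i \<and> v ! i < [q] ! i)"
        using x unfolding box_closure_def by blast
      then show "p < b \<and> b < q" by (simp add: all_less_one)
    qed
    have "y = b"
    proof (rule ccontr)
      assume "y \<noteq> b"
      then consider "y < b" | "b < y" by (metis neqE)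
      then show False
      proof cases
        case 1
        have "y - c < y" using c by simp
        then show False using H[of "y - c" b] 1 by simp
      next
        case 2
        have "y < y + c" using c by simp
        then show False using H[of b "y + c"] 2 by simp
      qed
    qed
    then show "x \<in> {[b]}" using y by simp
  qed
qed

lemma clD_sub_dcl:
  fixes R :: "'r \<Rightarrow> ('a::linordered_ab_group_add) list set"
  assumes c: "0 < (c::'a)" and OP: "OP R P" and ind: "dcl_indep R P D" and AP: "A \<subseteq> P"
    and b: "b \<in> clD R P D A"
  shows "b \<in> dcl R (A \<union> D)"
proof -
  have bP: "b \<in> P" and bdef: "Pind_def R P D A 1 {[b]}" using b unfolding clD_def by auto
  have "\<exists>\<psi> ps. set ps \<subseteq> A \<and> fv \<psi> \<subseteq> {..<1 + length ps} \<and>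
    {[b]} = {xs. length xs = 1 \<and> set xs \<subseteq> P \<and> sat P (ind_rel R P D) (\<lambda>i. (xs @ ps) ! i) \<psi>}"
    using bdef unfolding Pind_def_def definable_in_def .
  then obtain \<psi> ps where ps: "set ps \<subseteq> A" "fv \<psi> \<subseteq> {..<1 + length ps}"
    "{[b]} = {xs. length xs = 1 \<and> set xs \<subseteq> P \<and> sat P (ind_rel R P D) (\<lambda>i. (xs @ ps) ! i) \<psi>}"
    by iprover
  have "DL (exp_rel R P) D (1 + length ps) (\<lambda>xs. set xs \<subseteq> P \<and> sat P (ind_rel R P D) (\<lambda>i. xs ! i) \<psi>)"
    by (rule ind_sat[OF ps(2)])
  then have "DL (exp_rel R P) (A \<union> D) (1 + length ps) (\<lambda>xs. set xs \<subseteq> P \<and> sat P (ind_rel R P D) (\<lambda>i. xs ! i) \<psi>)"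
    by (rule DL_mono) auto
  then have "DL (exp_rel R P) (A \<union> D) 1 (\<lambda>xs. set (xs @ ps) \<subseteq> P \<and> sat P (ind_rel R P D) (\<lambda>i. (xs @ ps) ! i) \<psi>)"
    by (rule DL_param) (use ps(1) in auto)
  then have "DL (exp_rel R P) (A \<union> D) 1 (\<lambda>xs. xs ! 0 = b)"
  proof (rule DL_cong)
    fix xs :: "'a list" assume len: "length xs = 1"
    have "set ps \<subseteq> P" using ps(1) AP by auto
    then have "(set (xs @ ps) \<subseteq> P \<and> sat P (ind_rel R P D) (\<lambda>i. (xs @ ps) ! i) \<psi>) \<longleftrightarrow> xs \<in> {[b]}"
      using len by (subst ps(3)) auto
    also have "\<dots> \<longleftrightarrow> xs ! 0 = b" using len by (auto simp: len1_conv)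
    finally show "(set (xs @ ps) \<subseteq> P \<and> sat P (ind_rel R P D) (\<lambda>i. (xs @ ps) ! i) \<psi>) = (xs ! 0 = b)" .
  qed
  then have "P_def R P (A \<union> D) 1 {[b]}"
    unfolding P_def_def singleton_set_eq by (rule DL_imp_DF)
  moreover have "dcl_indep R P ((A \<union> D) - P)"
  proof -
    have "(A \<union> D) - P = D" using AP DP_disjoint[OF ind] by auto
    then show ?thesis using ind by simp
  qed
  ultimately have "L_def R (A \<union> D) 1 (box_closure 1 {[b]})"
    using OP unfolding OP_def by metis
  then show ?thesis unfolding box_closure_single[OF c] dcl_def by simp
qed

lemma dcl_sub_clD:
  fixes R :: "'r \<Rightarrow> 'a list set"
  assumes AP: "A \<subseteq> P" and bP: "b \<in> P" and b: "b \<in> dcl R (A \<union> D)"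
  shows "b \<in> clD R P D A"
proof -
  have "DL R (A \<union> D) 1 (\<lambda>xs. xs ! 0 = b)" using b by (simp add: dcl_iff)
  then have "\<exists>F. finite F \<and> F \<subseteq> A \<union> D \<and> DL R F 1 (\<lambda>xs. xs ! 0 = b)"
    by (rule DL_finite_params)
  then obtain F where F: "finite F" "F \<subseteq> A \<union> D" "DL R F 1 (\<lambda>xs. xs ! 0 = b)"
    by iprover
  have "DL R ((F \<inter> A) \<union> D) 1 (\<lambda>xs. xs ! 0 = b)" by (rule DL_mono[OF F(3)]) (use F(2) in auto)
  then have "\<exists>qs Z. set qs \<subseteq> F \<inter> A \<and> DL R D (1 + length qs) Z \<and> (\<forall>xs. length xs = 1 \<longrightarrow> (xs ! 0 = b) = Z (xs @ qs))"
    by (intro DL_abstract_fin) (use F(1) in auto)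
  then obtain qs Z where qs: "set qs \<subseteq> F \<inter> A" "DL R D (1 + length qs) Z"
    "\<forall>xs. length xs = 1 \<longrightarrow> (xs ! 0 = b) = Z (xs @ qs)" by iprover
  obtain ds \<phi> where ds: "set ds \<subseteq> D" "fv \<phi> \<subseteq> {..<(1 + length qs) + length ds}"
    "\<And>us. length us = 1 + length qs \<Longrightarrow> Z us \<longleftrightarrow> sat UNIV R (\<lambda>i. (us @ ds) ! i) \<phi>"
    using qs(2) by (rule DLE) (rule that; assumption)
  define \<psi> where "\<psi> = Rel (\<phi>, Suc (length qs), ds) [0..<Suc (length qs)]"
  have "Pind_def R P D A 1 {[b]}"
    unfolding Pind_def_def definable_in_def
  proof (intro exI conjI)
    show "set qs \<subseteq> A" using qs(1) by auto
    show "fv \<psi> \<subseteq> {..<1 + length qs}" by (auto simp: \<psi>_def)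
    show "{[b]} = {xs. length xs = 1 \<and> set xs \<subseteq> P \<and> sat P (ind_rel R P D) (\<lambda>i. (xs @ qs) ! i) \<psi>}"
    proof (rule set_eqI)
      fix xs :: "'a list"
      show "xs \<in> {[b]} \<longleftrightarrow> xs \<in> {xs. length xs = 1 \<and> set xs \<subseteq> P \<and> sat P (ind_rel R P D) (\<lambda>i. (xs @ qs) ! i) \<psi>}"
      proof (cases "length xs = 1")
        case True
        have m: "map (\<lambda>i. (xs @ qs) ! i) [0..<Suc (length qs)] = xs @ qs"
          using True map_nth[of "xs @ qs"] by simp
        have sqP: "set qs \<subseteq> P" using qs(1) AP by auto
        have "sat P (ind_rel R P D) (\<lambda>i. (xs @ qs) ! i) \<psi> \<longleftrightarrow> xs @ qs \<in> ind_rel R P D (\<phi>, Suc (length qs), ds)"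
          by (simp only: \<psi>_def sat.simps m)
        also have "\<dots> \<longleftrightarrow> set (xs @ qs) \<subseteq> P \<and> sat UNIV R (\<lambda>i. ((xs @ qs) @ ds) ! i) \<phi>"
          using ds(1,2) True by (simp add: ind_rel_def)
        also have "\<dots> \<longleftrightarrow> set (xs @ qs) \<subseteq> P \<and> Z (xs @ qs)"
          using ds(3)[of "xs @ qs"] True by simp
        also have "\<dots> \<longleftrightarrow> set xs \<subseteq> P \<and> xs ! 0 = b" using qs(3) True sqP by auto
        finally show ?thesis using True bP by (auto simp: len1_conv)
      qed auto
    qed
  qed
  then show ?thesis using bP unfolding clD_def by simp
qed

lemma clD_eq:
  fixes R :: "'r \<Rightarrow> ('a::linordered_ab_group_add) list set"
  assumes c: "0 < (c::'a)" and OP: "OP R P" and ind: "dcl_indep R P D" and AP: "A \<subseteq> P"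
  shows "clD R P D A = dcl R (A \<union> D) \<inter> P"
proof
  show "clD R P D A \<subseteq> dcl R (A \<union> D) \<inter> P"
    using clD_sub_dcl[OF c OP ind AP] unfolding clD_def by blast
  show "dcl R (A \<union> D) \<inter> P \<subseteq> clD R P D A"
    using dcl_sub_clD[OF AP] by blast
qed

definition bddu :: "('a::linorder) set \<Rightarrow> bool" where
  "bddu A \<longleftrightarrow> (\<exists>u. \<forall>x\<in>A. x \<le> u)"

lemma bddu_Un:
  fixes A B :: "('a::linorder) set"
  assumes "bddu A" "bddu B" shows "bddu (A \<union> B)"
proof -
  obtain a b where "\<forall>x\<in>A. x \<le> a" "\<forall>x\<in>B. x \<le> b" using assms unfolding bddu_def by blast
  then have "\<forall>x\<in>A \<union> B. x \<le> max a b" by (auto simp: le_max_iff_disj)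
  then show ?thesis unfolding bddu_def by blast
qed

lemma bddu_empty: "bddu {}" unfolding bddu_def by simp

lemma bddu_Union_fin:
  fixes \<I> :: "('a::linorder) set set"
  assumes "finite \<I>" "\<forall>I\<in>\<I>. bddu I"
  shows "bddu (\<Union>\<I>)"
  using assms by (induction \<I> rule: finite_induct) (auto intro: bddu_Un bddu_empty)

definition islub :: "('a::linorder) set \<Rightarrow> 'a \<Rightarrow> bool" where
  "islub S s \<longleftrightarrow> (\<forall>z\<in>S. z \<le> s) \<and> (\<forall>t. (\<forall>z\<in>S. z \<le> t) \<longrightarrow> s \<le> t)"

lemma islub_Un: "islub A a \<Longrightarrow> islub B b \<Longrightarrow> islub (A \<union> B) (max a b)"
  unfolding islub_def by (auto simp: max_def)

locale omin =
  fixes R :: "'r \<Rightarrow> ('a::linordered_ab_group_add) list set"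
  assumes omin: "omin_og R"
begin

lemma omin_parts: "\<exists>lt pl one c. R lt = {[x, y] | x y. x < y} \<and> R pl = {[x, y, z] | x y z. z = x + y} \<and>
        0 < c \<and> R one = {[c]}"
  using omin unfolding omin_og_def by (rule conjunct1)

lemma omin_part2: "\<forall>X. L_def R UNIV 1 X \<longrightarrow>
        (\<exists>\<I>. finite \<I> \<and> (\<forall>I\<in>\<I>. is_point_or_interval I) \<and> X = (\<lambda>x. [x]) ` \<Union>\<I>)"
  using omin unfolding omin_og_def by (rule conjunct2)

lemma ex_lt: "\<exists>lt. R lt = {[x, y] | x y. x < y}"
  using omin_parts by iprover

lemma ex_pl: "\<exists>pl. R pl = {[x, y, z] | x y z. z = x + y}"
  using omin_parts by iprover

lemma ex_pos: "\<exists>c::'a. 0 < c"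
  using omin_parts by iprover

lemma omin1:
  assumes "DL R A 1 (\<lambda>xs. xs ! 0 \<in> S)"
  shows "\<exists>\<I>. finite \<I> \<and> (\<forall>I\<in>\<I>. is_point_or_interval I) \<and> S = \<Union>\<I>"
proof -
  have "DL R UNIV 1 (\<lambda>xs. xs ! 0 \<in> S)" using assms by (rule DL_mono) simp
  then have "L_def R UNIV 1 {xs. length xs = 1 \<and> xs ! 0 \<in> S}"
    unfolding L_def_def by (rule DL_imp_DF)
  then have "\<exists>\<I>. finite \<I> \<and> (\<forall>I\<in>\<I>. is_point_or_interval I) \<and>
     {xs. length xs = 1 \<and> xs ! 0 \<in> S} = (\<lambda>x. [x]) ` \<Union>\<I>"
    using omin_part2 by iprover
  then obtain \<I> where I: "finite \<I>" "\<forall>I\<in>\<I>. is_point_or_interval I"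
    "{xs. length xs = 1 \<and> xs ! 0 \<in> S} = (\<lambda>x. [x]) ` \<Union>\<I>"
    by iprover
  have "S = \<Union>\<I>"
  proof (rule set_eqI)
    fix x
    have "x \<in> S \<longleftrightarrow> [x] \<in> {xs. length xs = 1 \<and> xs ! 0 \<in> S}" by simp
    also have "\<dots> \<longleftrightarrow> [x] \<in> (\<lambda>x. [x]) ` \<Union>\<I>" using I(3) by simp
    also have "\<dots> \<longleftrightarrow> x \<in> \<Union>\<I>" by auto
    finally show "x \<in> S \<longleftrightarrow> x \<in> \<Union>\<I>" .
  qed
  then show ?thesis using I by iprover
qed

lemma DL_lt:
  assumes "i < n" "j < n"
  shows "DL R A n (\<lambda>xs. xs ! i < xs ! j)"
proof -
  obtain lt where lt: "R lt = {[x, y] | x y. x < y}" using ex_lt by blast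
  have "DL R A n (\<lambda>xs. map (\<lambda>k. xs ! k) [i, j] \<in> R lt)"
    by (rule DL_rel) (use assms in auto)
  then show ?thesis by (rule DL_cong) (simp add: lt)
qed

lemma DL_le:
  assumes "i < n" "j < n"
  shows "DL R A n (\<lambda>xs. xs ! i \<le> xs ! j)"
  using DL_neg[OF DL_lt[OF assms(2,1)]] by (rule DL_cong) (simp add: not_less)

lemma DL_plus:
  assumes "i < n" "j < n" "k < n"
  shows "DL R A n (\<lambda>xs. xs ! k = xs ! i + xs ! j)"
proof -
  obtain pl where pl: "R pl = {[x, y, z] | x y z. z = x + y}" using ex_pl by blast
  have "DL R A n (\<lambda>xs. map (\<lambda>m. xs ! m) [i, j, k] \<in> R pl)"
    by (rule DL_rel) (use assms in auto)
  then show ?thesis by (rule DL_cong) (simp add: pl)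
qed

lemma DL_lt_c1:
  assumes "p \<in> A" "i < n"
  shows "DL R A n (\<lambda>xs. p < xs ! i)"
proof -
  have "DL R A (n + length [p]) (\<lambda>us. us ! n < us ! i)" by (rule DL_lt) (use assms in auto)
  then have "DL R A n (\<lambda>xs. (xs @ [p]) ! n < (xs @ [p]) ! i)" by (rule DL_param) (use assms in auto)
  then show ?thesis by (rule DL_cong) (use assms in \<open>simp add: nth_append\<close>)
qed

lemma DL_lt_c2:
  assumes "p \<in> A" "i < n"
  shows "DL R A n (\<lambda>xs. xs ! i < p)"
proof -
  have "DL R A (n + length [p]) (\<lambda>us. us ! i < us ! n)" by (rule DL_lt) (use assms in auto)
  then have "DL R A n (\<lambda>xs. (xs @ [p]) ! i < (xs @ [p]) ! n)" by (rule DL_param) (use assms in auto)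
  then show ?thesis by (rule DL_cong) (use assms in \<open>simp add: nth_append\<close>)
qed

lemma DL_le_c1:
  assumes "p \<in> A" "i < n"
  shows "DL R A n (\<lambda>xs. p \<le> xs ! i)"
  using DL_neg[OF DL_lt_c2[OF assms]] by (rule DL_cong) (simp add: not_less)

lemma DL_mem:
  assumes "DL R A 1 (\<lambda>xs. xs ! 0 \<in> S)" "i < n"
  shows "DL R A n (\<lambda>xs. xs ! i \<in> S)"
proof -
  have "DL R A n (\<lambda>xs. map (\<lambda>j. xs ! j) [i] ! 0 \<in> S)"
    by (rule DL_pre[OF assms(1)]) (use assms in auto)
  then show ?thesis by simp
qed

lemma dense:
  fixes x y :: 'a
  assumes "x < y"
  shows "\<exists>z. x < z \<and> z < y"
proof (rule ccontr)
  assume nz: "\<not> (\<exists>z. x < z \<and> z < y)"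
  define e where "e = y - x"
  have e0: "0 < e" using assms by (simp add: e_def)
  have nw: "\<not> (0 < w \<and> w < e)" for w
  proof
    assume w: "0 < w \<and> w < e"
    then have "x < x + w" "x + w < y" by (simp_all add: e_def less_diff_eq add.commute)
    then show False using nz by blast
  qed
  define E where "E = {z::'a. \<exists>w. z = w + w}"
  have "DL R UNIV (Suc 1) (\<lambda>us. us ! 0 = us ! 1 + us ! 1)" by (rule DL_plus) auto
  then have "DL R UNIV 1 (\<lambda>xs. \<exists>a. (xs @ [a]) ! 0 = (xs @ [a]) ! 1 + (xs @ [a]) ! 1)"
    by (rule DL_ex_last)
  then have "DL R UNIV 1 (\<lambda>xs. xs ! 0 \<in> E)"
    by (rule DL_cong) (auto simp: E_def nth_append)
  then have "\<exists>\<I>. finite \<I> \<and> (\<forall>I\<in>\<I>. is_point_or_interval I) \<and> E = \<Union>\<I>"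
    by (rule omin1)
  then obtain \<I> where I: "finite \<I>" "\<forall>I\<in>\<I>. is_point_or_interval I" "E = \<Union>\<I>"
    by iprover
  have "\<exists>J\<in>\<I>. \<not> bddu J"
  proof (rule ccontr)
    assume "\<not> (\<exists>J\<in>\<I>. \<not> bddu J)"
    then have "bddu E" using I bddu_Union_fin by auto
    then obtain B where B: "\<forall>z\<in>E. z \<le> B" unfolding bddu_def by blast
    define w where "w = max B 0 + e"
    have "max B 0 < w" using e0 by (simp add: w_def)
    then have w0: "0 < w" "B < w" by (auto simp: max_def split: if_splits)
    have "w < w + w" using w0 by simp
    moreover have "w + w \<in> E" by (auto simp: E_def)
    ultimately show False using B w0 by (meson le_less_trans less_asym)
  qed
  then obtain J where J: "J \<in> \<I>" "\<not> bddu J" by auto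
  have "\<exists>a. \<forall>z. a < z \<longrightarrow> z \<in> J"
  proof -
    have "is_point_or_interval J" using I J by blast
    then show ?thesis unfolding is_point_or_interval_def
    proof (elim disjE exE conjE)
      fix a assume "J = {a}"
      then have "bddu J" unfolding bddu_def by (intro exI[of _ a]) auto
      then show ?thesis using J by simp
    next
      fix a b assume "J = {a<..<b}"
      then have "bddu J" unfolding bddu_def by (intro exI[of _ b]) auto
      then show ?thesis using J by simp
    next
      fix a assume "J = {a<..}" then show ?thesis by auto
    next
      fix b assume "J = {..<b}"
      then have "bddu J" unfolding bddu_def by (intro exI[of _ b]) auto
      then show ?thesis using J by simp
    next
      assume "J = UNIV" then show ?thesis by auto
    qed
  qed
  moreover have "J \<subseteq> E" using I(3) J(1) by auto
  ultimately obtain a where a: "\<And>z. a < z \<Longrightarrow> z \<in> E" by auto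
  have "a < a + e" using e0 by simp
  then have "a + e \<in> E" "a + e + e \<in> E" using a e0 by (auto intro: less_trans)
  then obtain w v where wv: "a + e = w + w" "a + e + e = v + v" unfolding E_def by blast
  define d where "d = v - w"
  have ed: "e = d + d"
  proof -
    have "e = (a + e + e) - (a + e)" by (simp add: algebra_simps)
    also have "\<dots> = (v + v) - (w + w)" using wv by simp
    also have "\<dots> = d + d" by (simp add: d_def algebra_simps)
    finally show ?thesis .
  qed
  have "0 < d"
  proof (rule ccontr)
    assume "\<not> 0 < d"
    then have "d \<le> 0" by simp
    then have "d + d \<le> 0" using add_nonpos_nonpos by blast
    then show False using ed e0 by simp
  qed
  then have "e \<le> d" using nw[of d] by (simp add: not_less)
  then have "e + e \<le> d + d" using add_mono by blast
  then have "e + e \<le> e" using ed by simp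
  then show False using e0 by simp
qed

end

context omin
begin

lemma poi_nonempty:
  fixes I :: "'a set"
  assumes "is_point_or_interval I"
  shows "I \<noteq> {}"
proof -
  obtain c :: 'a where c: "0 < c" using ex_pos by blast
  show ?thesis using assms unfolding is_point_or_interval_def
  proof (elim disjE exE conjE)
    fix a b assume "a < b" "I = {a<..<b}"
    then show ?thesis using dense[of a b] by auto
  next
    fix a assume "I = {a<..}"
    moreover have "a < a + c" using c by simp
    ultimately have "a + c \<in> I" by simp
    then show ?thesis by blast
  next
    fix b assume "I = {..<b}"
    moreover have "b - c < b" using c by simp
    ultimately have "b - c \<in> I" by simp
    then show ?thesis by blast
  qed auto
qed

lemma poi_convex:
  fixes I :: "'a set"
  assumes "is_point_or_interval I" "p \<in> I" "q \<in> I" "p < z" "z < q"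
  shows "z \<in> I"
  using assms unfolding is_point_or_interval_def
  by (elim disjE exE conjE) (auto intro: less_trans)

lemma poi_lub:
  fixes I :: "'a set"
  assumes "is_point_or_interval I" "bddu I"
  shows "\<exists>s. islub I s"
proof -
  obtain c :: 'a where c: "0 < c" using ex_pos by blast
  obtain B where B: "\<forall>x\<in>I. x \<le> B" using assms(2) unfolding bddu_def by blast
  show ?thesis using assms(1) unfolding is_point_or_interval_def
  proof (elim disjE exE conjE)
    fix a assume "I = {a}"
    then show ?thesis by (intro exI[of _ a]) (auto simp: islub_def)
  next
    fix a b assume ab: "a < b" "I = {a<..<b}"
    have "islub I b" unfolding islub_def
    proof (intro conjI allI impI ballI)
      show "z \<le> b" if "z \<in> I" for z using that ab by auto
      fix t assume t: "\<forall>z\<in>I. z \<le> t"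
      show "b \<le> t"
      proof (rule ccontr)
        assume "\<not> b \<le> t"
        then have "max a t < b" using ab by (auto simp: not_le)
        then obtain z where z: "max a t < z" "z < b" using dense by blast
        then have "z \<in> I" using ab by simp
        then have "z \<le> t" using t by blast
        moreover have "t \<le> max a t" by simp
        ultimately have "z \<le> max a t" by (rule order_trans)
        from leD[OF this] z(1) show False by blast
      qed
    qed
    then show ?thesis by blast
  next
    fix a assume "I = {a<..}"
    moreover have "max a B < max a B + c" using c by simp
    ultimately show ?thesis using B by (meson greaterThan_iff le_less_trans less_le_not_le max.strict_boundedE)
  next
    fix b assume b: "I = {..<b}"
    have "islub I b" unfolding islub_def
    proof (intro conjI allI impI ballI)
      show "z \<le> b" if "z \<in> I" for z using that b by auto
      fix t assume t: "\<forall>z\<in>I. z \<le> t"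
      show "b \<le> t"
      proof (rule ccontr)
        assume "\<not> b \<le> t"
        then have "t < b" by (simp add: not_le)
        then obtain z where z: "t < z" "z < b" using dense by blast
        then have "z \<in> I" using b by simp
        then have "z \<le> t" using t by blast
        from leD[OF this] z(1) show False by blast
      qed
    qed
    then show ?thesis by blast
  next
    assume "I = UNIV"
    then have "B + c \<le> B" using B by simp
    then show ?thesis using c by simp
  qed
qed

lemma lub_fin:
  fixes \<I> :: "'a set set"
  assumes "finite \<I>" "\<forall>I\<in>\<I>. is_point_or_interval I" "bddu (\<Union>\<I>)" "\<Union>\<I> \<noteq> {}"
  shows "\<exists>s. islub (\<Union>\<I>) s"
  using assms
proof (induction \<I> rule: finite_induct)
  case empty
  then show ?case by simp
next
  case (insert I \<I>)
  have pI: "is_point_or_interval I" using insert.prems by simp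
  have bI: "bddu I" and bU: "bddu (\<Union>\<I>)" using insert.prems(2) unfolding bddu_def by auto
  obtain s where s: "islub I s" using poi_lub[OF pI bI] by blast
  show ?case
  proof (cases "\<Union>\<I> = {}")
    case True
    then have "I \<union> \<Union>\<I> = I" by blast
    then show ?thesis using s by auto
  next
    case False
    then obtain s' where s': "islub (\<Union>\<I>) s'" using insert.IH insert.prems(1) bU by auto
    have "islub (I \<union> \<Union>\<I>) (max s s')" by (rule islub_Un[OF s s'])
    then show ?thesis by auto
  qed
qed

lemma def_lub:
  fixes S :: "'a set"
  assumes "DL R A 1 (\<lambda>xs. xs ! 0 \<in> S)" "S \<noteq> {}" "bddu S"
  shows "\<exists>s. islub S s"
proof -
  have "\<exists>\<I>. finite \<I> \<and> (\<forall>I\<in>\<I>. is_point_or_interval I) \<and> S = \<Union>\<I>"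
    by (rule omin1[OF assms(1)])
  then obtain \<I> where I: "finite \<I>" "\<forall>I\<in>\<I>. is_point_or_interval I" "S = \<Union>\<I>" by auto
  show ?thesis using lub_fin[OF I(1,2)] assms(2,3) I(3) by simp
qed

lemma conn_aux:
  fixes S J :: "'a set"
  assumes S: "DL R UNIV 1 (\<lambda>xs. xs ! 0 \<in> S)"
    and cvx: "\<forall>p q z. p \<in> J \<longrightarrow> q \<in> J \<longrightarrow> p < z \<longrightarrow> z < q \<longrightarrow> z \<in> J"
    and loc: "\<forall>z\<in>J. \<exists>u v. u < z \<and> z < v \<and> (\<forall>w. u < w \<longrightarrow> w < v \<longrightarrow> w \<in> J \<longrightarrow> (w \<in> S \<longleftrightarrow> z \<in> S))"
    and xy: "x \<in> J" "y \<in> J" "x < y" "x \<in> S" "y \<notin> S"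
  shows False
proof -
  define E where "E = {z. x \<le> z \<and> (\<forall>w. x \<le> w \<longrightarrow> w \<le> z \<longrightarrow> w \<in> S)}"
  have "DL R UNIV (Suc 1) (\<lambda>us. x \<le> us ! 1 \<and> us ! 1 \<le> us ! 0 \<longrightarrow> us ! 1 \<in> S)"
    by (rule DL_imp[OF DL_conj[OF DL_le_c1 DL_le] DL_mem[OF S]]) auto
  then have "DL R UNIV 1 (\<lambda>xs. \<forall>a. x \<le> (xs @ [a]) ! 1 \<and> (xs @ [a]) ! 1 \<le> (xs @ [a]) ! 0 \<longrightarrow> (xs @ [a]) ! 1 \<in> S)"
    by (rule DL_all_last)
  then have DW: "DL R UNIV 1 (\<lambda>xs. \<forall>w. x \<le> w \<and> w \<le> xs ! 0 \<longrightarrow> w \<in> S)"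
    by (rule DL_cong) (simp add: nth_append)
  have "DL R UNIV 1 (\<lambda>xs. x \<le> xs ! 0 \<and> (\<forall>w. x \<le> w \<and> w \<le> xs ! 0 \<longrightarrow> w \<in> S))"
    using DL_conj[OF DL_le_c1[where p=x and A=UNIV and i=0 and n=1] DW] by simp
  then have DE: "DL R UNIV 1 (\<lambda>xs. xs ! 0 \<in> E)"
    by (rule DL_cong) (auto simp: E_def)
  have xE: "x \<in> E" unfolding E_def
  proof (intro CollectI conjI allI impI)
    show "x \<le> x" by simp
    fix w assume "x \<le> w" "w \<le> x"
    then have "x = w" by (rule antisym)
    then show "w \<in> S" using xy(4) by simp
  qed
  have Ey: "\<forall>z\<in>E. z \<le> y"
  proof
    fix z assume "z \<in> E"
    show "z \<le> y"
    proof (rule ccontr)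
      assume "\<not> z \<le> y"
      then have "y \<le> z" by simp
      then have "y \<in> S" using \<open>z \<in> E\<close> xy(3) unfolding E_def by auto
      then show False using xy(5) by simp
    qed
  qed
  then have "bddu E" unfolding bddu_def by blast
  then obtain e where e: "islub E e" using def_lub[OF DE] xE by blast
  have xe: "x \<le> e" using e xE unfolding islub_def by blast
  have ey: "e \<le> y" using e Ey unfolding islub_def by blast
  have eJ: "e \<in> J"
  proof (cases "e = x")
    case True then show ?thesis using xy(1) by simp
  next
    case False
    then have xe': "x < e" using xe by simp
    show ?thesis
    proof (cases "e = y")
      case True then show ?thesis using xy(2) by simp
    next
      case False
      then have "e < y" using ey by simp
      then show ?thesis using cvx[rule_format, OF xy(1) xy(2) xe'] by simp
    qed
  qed
  have below: "\<exists>z\<in>E. w < z" if "w < e" for w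
  proof (rule ccontr)
    assume "\<not> (\<exists>z\<in>E. w < z)"
    then have "\<forall>z\<in>E. z \<le> w" by (auto simp: not_less)
    then have "e \<le> w" using e unfolding islub_def by blast
    then show False using that by simp
  qed
  have K: "w \<in> S" if wx: "x \<le> w" and we: "w < e" for w
  proof -
    obtain z where "z \<in> E" "w < z" using below[OF we] by blast
    then show ?thesis using wx unfolding E_def by auto
  qed
  obtain u v where uv: "u < e" "e < v" "\<forall>w. u < w \<longrightarrow> w < v \<longrightarrow> w \<in> J \<longrightarrow> (w \<in> S \<longleftrightarrow> e \<in> S)"
    using loc[rule_format, OF eJ] by blast
  show False
  proof (cases "e \<in> S")
    case True
    then have "e \<noteq> y" using xy(5) by auto
    then have "e < y" using ey by simp
    then have "e < min v y" using uv(2) by simp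
    then obtain w' where w': "e < w'" "w' < min v y" using dense by blast
    have "w' \<in> E" unfolding E_def
    proof (intro CollectI conjI allI impI)
      show "x \<le> w'" using xe w' by simp
      fix w assume w: "x \<le> w" "w \<le> w'"
      consider "w < e" | "w = e" | "e < w" by (metis neqE)
      then show "w \<in> S"
      proof cases
        case 1 then show ?thesis using K w by blast
      next
        case 2 then show ?thesis using True by simp
      next
        case 3
        have "w < v" "w < y" using w w' by auto
        moreover have "x < w" using xe 3 by simp
        ultimately have "w \<in> J" using cvx xy(1,2) by blast
        then show ?thesis using uv(3) \<open>w < v\<close> 3 uv(1) True by (meson less_trans)
      qed
    qed
    then have "w' \<le> e" using e unfolding islub_def by blast
    then show False using w' by simp
  next
    case False
    have "\<not> (u < x)"
    proof
      assume "u < x"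
      moreover have "x < v" using xe uv(2) by simp
      ultimately have "x \<in> S \<longleftrightarrow> e \<in> S" using uv(3) xy(1) by blast
      then show False using xy(4) False by simp
    qed
    then have xu: "x \<le> u" by simp
    obtain z where z: "z \<in> E" "u < z" using below[OF uv(1)] by blast
    have zS: "z \<in> S" using z(1) unfolding E_def by auto
    have ze: "z \<le> e" using e z(1) unfolding islub_def by blast
    have "z \<noteq> y" using zS xy(5) by auto
    then have zy: "z < y" using ze ey by simp
    have "x < z" using xu z(2) by simp
    then have zJ: "z \<in> J" using cvx xy(1,2) zy by blast
    have "z < v" using ze uv(2) by simp
    then have "z \<in> S \<longleftrightarrow> e \<in> S" using uv(3) z(2) zJ by blast
    then show False using zS False by simp
  qed
qed

lemma conn:
  fixes S J :: "'a set"
  assumes S: "DL R UNIV 1 (\<lambda>xs. xs ! 0 \<in> S)"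
    and cvx: "\<forall>p q z. p \<in> J \<longrightarrow> q \<in> J \<longrightarrow> p < z \<longrightarrow> z < q \<longrightarrow> z \<in> J"
    and loc: "\<forall>z\<in>J. \<exists>u v. u < z \<and> z < v \<and> (\<forall>w. u < w \<longrightarrow> w < v \<longrightarrow> w \<in> J \<longrightarrow> (w \<in> S \<longleftrightarrow> z \<in> S))"
    and xy: "x \<in> J" "y \<in> J" "x \<in> S" "y \<notin> S"
  shows False
proof -
  consider "x < y" | "y < x" using xy by (metis neqE)
  then show False
  proof cases
    case 1
    then show False using conn_aux[OF S cvx loc xy(1,2) 1 xy(3,4)] by blast
  next
    case 2
    have S': "DL R UNIV 1 (\<lambda>xs. xs ! 0 \<in> - S)"
      using DL_neg[OF S] by (rule DL_cong) simp
    have loc': "\<exists>u v. u < z \<and> z < v \<and> (\<forall>w. u < w \<longrightarrow> w < v \<longrightarrow> w \<in> J \<longrightarrow> (w \<in> - S \<longleftrightarrow> z \<in> - S))"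
      if "z \<in> J" for z
      using loc[rule_format, OF that] by auto
    have loc'': "\<forall>z\<in>J. \<exists>u v. u < z \<and> z < v \<and> (\<forall>w. u < w \<longrightarrow> w < v \<longrightarrow> w \<in> J \<longrightarrow> (w \<in> - S \<longleftrightarrow> z \<in> - S))"
      using loc' by blast
    show False using conn_aux[OF S' cvx loc'' xy(2,1) 2] xy(3,4) by blast
  qed
qed

end

lemma DL_ex_last':
  fixes R :: "'r \<Rightarrow> 'a list set"
  assumes "DL R A m Q" "m = Suc n"
  shows "DL R A n (\<lambda>xs. \<exists>a. Q (xs @ [a]))"
  using DL_ex_last[of R A n Q] assms by simp

lemma DL_all_last':
  fixes R :: "'r \<Rightarrow> 'a list set"
  assumes "DL R A m Q" "m = Suc n"
  shows "DL R A n (\<lambda>xs. \<forall>a. Q (xs @ [a]))"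
  using DL_all_last[of R A n Q] assms by simp

context omin
begin

lemma fin_dcl:
  fixes S :: "'a set"
  shows "finite S \<Longrightarrow> DL R A 1 (\<lambda>xs. xs ! 0 \<in> S) \<Longrightarrow> S \<subseteq> dcl R A"
proof (induction "card S" arbitrary: S rule: less_induct)
  case less
  show ?case
  proof (cases "S = {}")
    case True
    then show ?thesis by simp
  next
    case False
    define m where "m = Min S"
    have mS: "m \<in> S" using Min_in less.prems(1) False m_def by blast
    have mle: "\<forall>y\<in>S. m \<le> y" using Min_le less.prems(1) m_def by blast
    define Q where "Q = (\<lambda>x. \<forall>y. y \<in> S \<longrightarrow> x \<le> y)"
    have "DL R A (Suc 1) (\<lambda>us. us ! 1 \<in> S \<longrightarrow> us ! 0 \<le> us ! 1)"
      by (rule DL_imp[OF DL_mem[OF less.prems(2)] DL_le]) auto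
    then have "DL R A 1 (\<lambda>xs. \<forall>a. (xs @ [a]) ! 1 \<in> S \<longrightarrow> (xs @ [a]) ! 0 \<le> (xs @ [a]) ! 1)"
      by (rule DL_all_last)
    then have DQ: "DL R A 1 (\<lambda>xs. Q (xs ! 0))"
      by (rule DL_cong) (simp add: Q_def nth_append)
    have eqm: "x \<in> S \<and> Q x \<longleftrightarrow> x = m" for x
    proof
      assume x: "x \<in> S \<and> Q x"
      then have "m \<le> x" using mle by blast
      moreover have "x \<le> m" using x mS unfolding Q_def by blast
      ultimately show "x = m" by (rule antisym[rotated])
    next
      assume "x = m"
      then show "x \<in> S \<and> Q x" using mS mle unfolding Q_def by blast
    qed
    have "DL R A 1 (\<lambda>xs. xs ! 0 \<in> S \<and> Q (xs ! 0))" by (rule DL_conj[OF less.prems(2) DQ])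
    then have "DL R A 1 (\<lambda>xs. xs ! 0 = m)" by (rule DL_cong) (simp add: eqm)
    then have mdcl: "m \<in> dcl R A" by (simp add: dcl_iff)
    have "DL R A 1 (\<lambda>xs. xs ! 0 \<in> S \<and> \<not> Q (xs ! 0))" by (rule DL_conj[OF less.prems(2) DL_neg[OF DQ]])
    then have D': "DL R A 1 (\<lambda>xs. xs ! 0 \<in> S - {m})"
      by (rule DL_cong) (use eqm in blast)
    have "card (S - {m}) < card S" using mS less.prems(1) by (rule card_Diff1_less[rotated])
    moreover have "finite (S - {m})" using less.prems(1) by simp
    ultimately have "S - {m} \<subseteq> dcl R A" using less.hyps D' by blast
    then show ?thesis using mdcl by blast
  qed
qed

lemma interior:
  fixes S :: "'a set"
  assumes DS: "DL R A 1 (\<lambda>xs. xs ! 0 \<in> S)" and aS: "a \<in> S" and na: "a \<notin> dcl R A"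
  shows "\<exists>u v. u < a \<and> a < v \<and> (\<forall>z. u < z \<longrightarrow> z < v \<longrightarrow> z \<in> S)"
proof -
  obtain c :: 'a where c: "0 < c" using ex_pos by blast
  define IntP where "IntP = (\<lambda>x. \<exists>u v. u < x \<and> x < v \<and> (\<forall>z. u < z \<longrightarrow> z < v \<longrightarrow> z \<in> S))"
  have "DL R A (Suc 3) (\<lambda>us. us ! 1 < us ! 3 \<and> us ! 3 < us ! 2 \<longrightarrow> us ! 3 \<in> S)"
    by (rule DL_imp[OF DL_conj[OF DL_lt DL_lt] DL_mem[OF DS]]) auto
  then have "DL R A 3 (\<lambda>xs. \<forall>a. (xs @ [a]) ! 1 < (xs @ [a]) ! 3 \<and> (xs @ [a]) ! 3 < (xs @ [a]) ! 2 \<longrightarrow> (xs @ [a]) ! 3 \<in> S)"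
    by (rule DL_all_last)
  then have D3a: "DL R A 3 (\<lambda>xs. \<forall>z. xs ! 1 < z \<and> z < xs ! 2 \<longrightarrow> z \<in> S)"
    by (rule DL_cong) (simp add: nth_append)
  have "DL R A 3 (\<lambda>xs. (xs ! 1 < xs ! 0 \<and> xs ! 0 < xs ! 2) \<and> (\<forall>z. xs ! 1 < z \<and> z < xs ! 2 \<longrightarrow> z \<in> S))"
    by (rule DL_conj[OF DL_conj[OF DL_lt DL_lt] D3a]) auto
  then have "DL R A 2 (\<lambda>xs. \<exists>a. ((xs @ [a]) ! 1 < (xs @ [a]) ! 0 \<and> (xs @ [a]) ! 0 < (xs @ [a]) ! 2) \<and>
       (\<forall>z. (xs @ [a]) ! 1 < z \<and> z < (xs @ [a]) ! 2 \<longrightarrow> z \<in> S))"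
    by (rule DL_ex_last') simp
  then have "DL R A 2 (\<lambda>xs. \<exists>v. (xs ! 1 < xs ! 0 \<and> xs ! 0 < v) \<and> (\<forall>z. xs ! 1 < z \<and> z < v \<longrightarrow> z \<in> S))"
    by (rule DL_cong) (simp add: nth_append)
  then have "DL R A 1 (\<lambda>xs. \<exists>a. \<exists>v. ((xs @ [a]) ! 1 < (xs @ [a]) ! 0 \<and> (xs @ [a]) ! 0 < v) \<and>
       (\<forall>z. (xs @ [a]) ! 1 < z \<and> z < v \<longrightarrow> z \<in> S))"
    by (rule DL_ex_last') simp
  then have DI: "DL R A 1 (\<lambda>xs. IntP (xs ! 0))"
    by (rule DL_cong) (auto simp: IntP_def nth_append)
  define Bd where "Bd = {x. x \<in> S \<and> \<not> IntP x}"
  have DB: "DL R A 1 (\<lambda>xs. xs ! 0 \<in> Bd)"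
    using DL_conj[OF DS DL_neg[OF DI]] by (rule DL_cong) (simp add: Bd_def)
  have "\<exists>\<I>. finite \<I> \<and> (\<forall>I\<in>\<I>. is_point_or_interval I) \<and> S = \<Union>\<I>"
    by (rule omin1[OF DS])
  then obtain \<I> where I: "finite \<I>" "\<forall>I\<in>\<I>. is_point_or_interval I" "S = \<Union>\<I>" by auto
  have BdI: "Bd \<subseteq> (\<lambda>p. {p}) -` \<I>"
  proof
    fix x assume xB: "x \<in> Bd"
    then have "x \<in> S" unfolding Bd_def by simp
    then obtain J where J: "J \<in> \<I>" "x \<in> J" using I(3) by auto
    have nI: "\<not> IntP x" using xB unfolding Bd_def by simp
    have JS: "J \<subseteq> S" using I(3) J(1) by auto
    have "is_point_or_interval J" using I(2) J(1) by blast
    then have "J = {x}" unfolding is_point_or_interval_def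
    proof (elim disjE exE conjE)
      fix p assume "J = {p}" then show "J = {x}" using J by simp
    next
      fix p q assume pq: "p < q" "J = {p<..<q}"
      then have "IntP x" unfolding IntP_def using J(2) JS by (intro exI[of _ p] exI[of _ q]) auto
      then show "J = {x}" using nI by simp
    next
      fix p assume p: "J = {p<..}"
      have "x < x + c" using c by simp
      then have "IntP x" unfolding IntP_def using J(2) JS p by (intro exI[of _ p] exI[of _ "x + c"]) auto
      then show "J = {x}" using nI by simp
    next
      fix q assume q: "J = {..<q}"
      have "x - c < x" using c by simp
      then have "IntP x" unfolding IntP_def using J(2) JS q by (intro exI[of _ "x - c"] exI[of _ q]) auto
      then show "J = {x}" using nI by simp
    next
      assume U: "J = UNIV"
      have "x - c < x" "x < x + c" using c by simp_all
      then have "IntP x" unfolding IntP_def using JS U by (intro exI[of _ "x - c"] exI[of _ "x + c"]) auto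
      then show "J = {x}" using nI by simp
    qed
    then show "x \<in> (\<lambda>p. {p}) -` \<I>" using J(1) by simp
  qed
  have "inj (\<lambda>p::'a. {p})" by (auto simp: inj_def)
  then have "finite ((\<lambda>p. {p}) -` \<I>)" using I(1) by (rule finite_vimageI[rotated])
  then have "finite Bd" using BdI by (rule finite_subset[rotated])
  then have "Bd \<subseteq> dcl R A" using DB by (rule fin_dcl)
  then have "a \<notin> Bd" using na by blast
  then show ?thesis using aS unfolding Bd_def IntP_def by blast
qed

end

lemma subsingleton_finite:
  assumes "\<forall>x\<in>A. \<forall>y\<in>A. x = y"
  shows "finite A"
proof (cases "A = {}")
  case False
  then obtain x where "x \<in> A" by blast
  then have "A \<subseteq> {x}" using assms by blast
  then show ?thesis using finite_subset by blast
qed simp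

context omin
begin

lemma infinite_interval:
  fixes x y :: 'a
  assumes "x < y"
  shows "infinite {x<..<y}"
proof
  assume fin: "finite {x<..<y}"
  obtain z where "x < z" "z < y" using dense[OF assms] by blast
  then have ne: "{x<..<y} \<noteq> {}" by auto
  define M where "M = Max {x<..<y}"
  have M: "M \<in> {x<..<y}" using Max_in[OF fin ne] M_def by simp
  then obtain w where w: "M < w" "w < y" using dense by auto
  then have "w \<in> {x<..<y}" using M by auto
  then have "w \<le> M" using Max_ge[OF fin] M_def by simp
  then show False using w(1) by simp
qed

lemma exchange:
  fixes a b :: 'a
  assumes b1: "b \<in> dcl R (insert a C)" and b2: "b \<notin> dcl R C"
  shows "a \<in> dcl R (insert b C)"
proof (rule ccontr)
  assume na: "a \<notin> dcl R (insert b C)"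
  have "DL R (insert a C) 1 (\<lambda>xs. xs ! 0 = b)" using b1 by (simp add: dcl_iff)
  then have "\<exists>Z. DL R C (Suc 1) Z \<and> (\<forall>xs. length xs = 1 \<longrightarrow> (xs ! 0 = b) = Z (xs @ [a]))"
    by (rule DL_abstract)
  then obtain Z where Z: "DL R C (Suc 1) Z" "\<forall>xs. length xs = 1 \<longrightarrow> (xs ! 0 = b) = Z (xs @ [a])"
    by auto
  define G where "G = (\<lambda>x y. Z [y, x])"
  have Ga: "G a y \<longleftrightarrow> y = b" for y
    using Z(2)[rule_format, of "[y]"] by (simp add: G_def)
  define F where "F = (\<lambda>x y. G x y \<and> (\<forall>y'. G x y' \<longrightarrow> y' = y))"
  have Fab: "F a b" using Ga by (simp add: F_def)
  have Ffun: "y = y'" if "F x y" "F x y'" for x y y'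
    using that unfolding F_def by blast
  have DG: "DL R C n (\<lambda>us. G (us ! i) (us ! j))" if "i < n" "j < n" for n i j
  proof -
    have "DL R C n (\<lambda>us. Z (map (\<lambda>k. us ! k) [j, i]))"
      by (rule DL_pre[OF Z(1)]) (use that in auto)
    then show ?thesis by (rule DL_cong) (simp add: G_def)
  qed
  have DF: "DL R C n (\<lambda>us. F (us ! i) (us ! j))" if ij: "i < n" "j < n" for n i j
  proof -
    have "DL R C (Suc n) (\<lambda>us. G (us ! i) (us ! n) \<longrightarrow> us ! n = us ! j)"
      by (rule DL_imp[OF DG DL_eq]) (use ij in auto)
    then have "DL R C n (\<lambda>xs. \<forall>a. G ((xs @ [a]) ! i) ((xs @ [a]) ! n) \<longrightarrow> (xs @ [a]) ! n = (xs @ [a]) ! j)"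
      by (rule DL_all_last)
    then have "DL R C n (\<lambda>xs. \<forall>y'. G (xs ! i) y' \<longrightarrow> y' = xs ! j)"
      by (rule DL_cong) (use ij in \<open>simp add: nth_append\<close>)
    then have "DL R C n (\<lambda>xs. G (xs ! i) (xs ! j) \<and> (\<forall>y'. G (xs ! i) y' \<longrightarrow> y' = xs ! j))"
      by (rule DL_conj[OF DG[OF ij]])
    then show ?thesis by (simp add: F_def)
  qed
  \<comment> \<open>Step 1: f is constant b on a neighbourhood of a\<close>
  have "DL R (insert b C) (1 + length [b]) (\<lambda>us. F (us ! 0) (us ! 1))"
    by (rule DL_mono[OF DF]) auto
  then have "DL R (insert b C) 1 (\<lambda>xs. F ((xs @ [b]) ! 0) ((xs @ [b]) ! 1))"
    by (rule DL_param) auto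
  then have DSb: "DL R (insert b C) 1 (\<lambda>xs. xs ! 0 \<in> {x. F x b})"
    by (rule DL_cong) (simp add: nth_append)
  obtain u1 v1 where uv1: "u1 < a" "a < v1" "\<forall>z. u1 < z \<longrightarrow> z < v1 \<longrightarrow> z \<in> {x. F x b}"
    using interior[OF DSb _ na] Fab by auto
  define V where "V = {y. \<exists>u v. u < v \<and> (\<forall>z. u < z \<longrightarrow> z < v \<longrightarrow> F z y)}"
  have "DL R C (Suc 3) (\<lambda>us. us ! 1 < us ! 3 \<and> us ! 3 < us ! 2 \<longrightarrow> F (us ! 3) (us ! 0))"
    by (rule DL_imp[OF DL_conj[OF DL_lt DL_lt] DF]) auto
  then have "DL R C 3 (\<lambda>xs. \<forall>a. (xs @ [a]) ! 1 < (xs @ [a]) ! 3 \<and> (xs @ [a]) ! 3 < (xs @ [a]) ! 2 \<longrightarrow> F ((xs @ [a]) ! 3) ((xs @ [a]) ! 0))"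
    by (rule DL_all_last)
  then have V3: "DL R C 3 (\<lambda>xs. \<forall>z. xs ! 1 < z \<and> z < xs ! 2 \<longrightarrow> F z (xs ! 0))"
    by (rule DL_cong) (simp add: nth_append)
  have "DL R C 3 (\<lambda>xs. xs ! 1 < xs ! 2 \<and> (\<forall>z. xs ! 1 < z \<and> z < xs ! 2 \<longrightarrow> F z (xs ! 0)))"
    by (rule DL_conj[OF DL_lt V3]) auto
  then have "DL R C 2 (\<lambda>xs. \<exists>a. (xs @ [a]) ! 1 < (xs @ [a]) ! 2 \<and> (\<forall>z. (xs @ [a]) ! 1 < z \<and> z < (xs @ [a]) ! 2 \<longrightarrow> F z ((xs @ [a]) ! 0)))"
    by (rule DL_ex_last') simp
  then have "DL R C 2 (\<lambda>xs. \<exists>v. xs ! 1 < v \<and> (\<forall>z. xs ! 1 < z \<and> z < v \<longrightarrow> F z (xs ! 0)))"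
    by (rule DL_cong) (simp add: nth_append)
  then have "DL R C 1 (\<lambda>xs. \<exists>a. \<exists>v. (xs @ [a]) ! 1 < v \<and> (\<forall>z. (xs @ [a]) ! 1 < z \<and> z < v \<longrightarrow> F z ((xs @ [a]) ! 0)))"
    by (rule DL_ex_last') simp
  then have DV: "DL R C 1 (\<lambda>xs. xs ! 0 \<in> V)"
    by (rule DL_cong) (auto simp: V_def nth_append)
  have bV: "b \<in> V" unfolding V_def using uv1 by (blast intro: less_trans)
  obtain s t where st: "s < b" "b < t" "\<forall>y. s < y \<longrightarrow> y < t \<longrightarrow> y \<in> V"
    using interior[OF DV bV b2] by auto
  define \<Omega> where "\<Omega> = {z. \<exists>y. s < y \<and> y < t \<and> (\<exists>u v. u < z \<and> z < v \<and> (\<forall>w. u < w \<longrightarrow> w < v \<longrightarrow> F w y))}"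
  have DFU: "DL R UNIV n (\<lambda>us. F (us ! i) (us ! j))" if "i < n" "j < n" for n i j
    by (rule DL_mono[OF DF[OF that]]) simp
  have "DL R UNIV (Suc 4) (\<lambda>us. us ! 2 < us ! 4 \<and> us ! 4 < us ! 3 \<longrightarrow> F (us ! 4) (us ! 1))"
    by (rule DL_imp[OF DL_conj[OF DL_lt DL_lt] DFU]) auto
  then have "DL R UNIV 4 (\<lambda>xs. \<forall>a. (xs @ [a]) ! 2 < (xs @ [a]) ! 4 \<and> (xs @ [a]) ! 4 < (xs @ [a]) ! 3 \<longrightarrow> F ((xs @ [a]) ! 4) ((xs @ [a]) ! 1))"
    by (rule DL_all_last)
  then have W4: "DL R UNIV 4 (\<lambda>xs. \<forall>w. xs ! 2 < w \<and> w < xs ! 3 \<longrightarrow> F w (xs ! 1))"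
    by (rule DL_cong) (simp add: nth_append)
  have "DL R UNIV 4 (\<lambda>xs. (xs ! 2 < xs ! 0 \<and> xs ! 0 < xs ! 3) \<and> (\<forall>w. xs ! 2 < w \<and> w < xs ! 3 \<longrightarrow> F w (xs ! 1)))"
    by (rule DL_conj[OF DL_conj[OF DL_lt DL_lt] W4]) auto
  then have "DL R UNIV 3 (\<lambda>xs. \<exists>a. ((xs @ [a]) ! 2 < (xs @ [a]) ! 0 \<and> (xs @ [a]) ! 0 < (xs @ [a]) ! 3) \<and> (\<forall>w. (xs @ [a]) ! 2 < w \<and> w < (xs @ [a]) ! 3 \<longrightarrow> F w ((xs @ [a]) ! 1)))"
    by (rule DL_ex_last') simp
  then have "DL R UNIV 3 (\<lambda>xs. \<exists>v. (xs ! 2 < xs ! 0 \<and> xs ! 0 < v) \<and> (\<forall>w. xs ! 2 < w \<and> w < v \<longrightarrow> F w (xs ! 1)))"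
    by (rule DL_cong) (simp add: nth_append)
  then have "DL R UNIV 2 (\<lambda>xs. \<exists>a. \<exists>v. ((xs @ [a]) ! 2 < (xs @ [a]) ! 0 \<and> (xs @ [a]) ! 0 < v) \<and> (\<forall>w. (xs @ [a]) ! 2 < w \<and> w < v \<longrightarrow> F w ((xs @ [a]) ! 1)))"
    by (rule DL_ex_last') simp
  then have D2: "DL R UNIV 2 (\<lambda>xs. \<exists>u v. (u < xs ! 0 \<and> xs ! 0 < v) \<and> (\<forall>w. u < w \<and> w < v \<longrightarrow> F w (xs ! 1)))"
    by (rule DL_cong) (simp add: nth_append)
  have "DL R UNIV 2 (\<lambda>xs. (s < xs ! 1 \<and> xs ! 1 < t) \<and> (\<exists>u v. (u < xs ! 0 \<and> xs ! 0 < v) \<and> (\<forall>w. u < w \<and> w < v \<longrightarrow> F w (xs ! 1))))"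
    by (rule DL_conj[OF DL_conj[OF DL_lt_c1 DL_lt_c2] D2]) auto
  then have "DL R UNIV 1 (\<lambda>xs. \<exists>a. (s < (xs @ [a]) ! 1 \<and> (xs @ [a]) ! 1 < t) \<and> (\<exists>u v. (u < (xs @ [a]) ! 0 \<and> (xs @ [a]) ! 0 < v) \<and> (\<forall>w. u < w \<and> w < v \<longrightarrow> F w ((xs @ [a]) ! 1))))"
    by (rule DL_ex_last') simp
  then have DO: "DL R UNIV 1 (\<lambda>xs. xs ! 0 \<in> \<Omega>)"
    by (rule DL_cong) (auto simp: \<Omega>_def nth_append)
  have "\<exists>\<I>. finite \<I> \<and> (\<forall>I\<in>\<I>. is_point_or_interval I) \<and> \<Omega> = \<Union>\<I>"
    by (rule omin1[OF DO])
  then obtain \<I> where I: "finite \<I>" "\<forall>I\<in>\<I>. is_point_or_interval I" "\<Omega> = \<Union>\<I>" by auto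
  \<comment> \<open>Step 4: f is constant on each piece\<close>
  have const: "F z y0" if J: "J \<in> \<I>" and z0: "z0 \<in> J" and zJ: "z \<in> J" and Fy0: "F z0 y0" for J z0 z y0
  proof (rule ccontr)
    assume nF: "\<not> F z y0"
    have "DL R UNIV (1 + length [y0]) (\<lambda>us. F (us ! 0) (us ! 1))" by (rule DFU) auto
    then have "DL R UNIV 1 (\<lambda>xs. F ((xs @ [y0]) ! 0) ((xs @ [y0]) ! 1))" by (rule DL_param) auto
    then have DS': "DL R UNIV 1 (\<lambda>xs. xs ! 0 \<in> {w. F w y0})" by (rule DL_cong) (simp add: nth_append)
    have pJ: "is_point_or_interval J" using I(2) J by blast
    have cvx: "\<forall>p q z. p \<in> J \<longrightarrow> q \<in> J \<longrightarrow> p < z \<longrightarrow> z < q \<longrightarrow> z \<in> J"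
      using poi_convex[OF pJ] by blast
    have JO: "J \<subseteq> \<Omega>" using I(3) J by auto
    have loc: "\<forall>z\<in>J. \<exists>u v. u < z \<and> z < v \<and> (\<forall>w. u < w \<longrightarrow> w < v \<longrightarrow> w \<in> J \<longrightarrow> (w \<in> {w. F w y0} \<longleftrightarrow> z \<in> {w. F w y0}))"
    proof
      fix z assume "z \<in> J"
      then have "z \<in> \<Omega>" using JO by blast
      then obtain y u v where yuv: "u < z" "z < v" "\<forall>w. u < w \<longrightarrow> w < v \<longrightarrow> F w y"
        unfolding \<Omega>_def by blast
      have Fz: "F z y" using yuv by blast
      have "\<forall>w. u < w \<longrightarrow> w < v \<longrightarrow> w \<in> J \<longrightarrow> (w \<in> {w. F w y0} \<longleftrightarrow> z \<in> {w. F w y0})"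
      proof (intro allI impI)
        fix w assume "u < w" "w < v" "w \<in> J"
        then have Fw: "F w y" using yuv by blast
        have "F w y0 \<longleftrightarrow> y0 = y" using Fw Ffun by blast
        moreover have "F z y0 \<longleftrightarrow> y0 = y" using Fz Ffun by blast
        ultimately show "w \<in> {w. F w y0} \<longleftrightarrow> z \<in> {w. F w y0}" by simp
      qed
      then show "\<exists>u v. u < z \<and> z < v \<and> (\<forall>w. u < w \<longrightarrow> w < v \<longrightarrow> w \<in> J \<longrightarrow> (w \<in> {w. F w y0} \<longleftrightarrow> z \<in> {w. F w y0}))"
        using yuv(1,2) by blast
    qed
    show False using conn[OF DS' cvx loc z0 zJ] Fy0 nF by simp
  qed
  define Y where "Y = {y. \<exists>z\<in>\<Omega>. F z y}"
  have "Y \<subseteq> (\<Union>J\<in>\<I>. {y. \<exists>z\<in>J. F z y})" unfolding Y_def using I(3) by auto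
  moreover have "finite (\<Union>J\<in>\<I>. {y. \<exists>z\<in>J. F z y})"
  proof (rule finite_UN_I[OF I(1)])
    fix J assume J: "J \<in> \<I>"
    show "finite {y. \<exists>z\<in>J. F z y}"
    proof (rule subsingleton_finite, intro ballI)
      fix y1 y2 assume "y1 \<in> {y. \<exists>z\<in>J. F z y}" "y2 \<in> {y. \<exists>z\<in>J. F z y}"
      then obtain z1 z2 where z: "z1 \<in> J" "F z1 y1" "z2 \<in> J" "F z2 y2" by blast
      have "F z1 y2" by (rule const[OF J z(3) z(1) z(4)])
      then show "y1 = y2" using z(2) Ffun by blast
    qed
  qed
  ultimately have finY: "finite Y" by (rule finite_subset)
  have "{s<..<t} \<subseteq> Y"
  proof
    fix y assume "y \<in> {s<..<t}"
    then have y: "s < y" "y < t" by auto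
    then have "y \<in> V" using st by blast
    then obtain u v where uv: "u < v" "\<forall>z. u < z \<longrightarrow> z < v \<longrightarrow> F z y" unfolding V_def by blast
    obtain z where z: "u < z" "z < v" using dense[OF uv(1)] by blast
    have "z \<in> \<Omega>" unfolding \<Omega>_def using y z uv(2) by blast
    moreover have "F z y" using uv(2) z by blast
    ultimately show "y \<in> Y" unfolding Y_def by blast
  qed
  then have "finite {s<..<t}" using finY by (rule finite_subset)
  moreover have "s < t" using st by (blast intro: less_trans)
  ultimately show False using infinite_interval by blast
qed

end

theorem corollary3p7:
  fixes R :: "'r \<Rightarrow> ('a::linordered_ab_group_add) list set"
    and P D :: "'a set"
  assumes "omin_og R"
    and "dcl_indep R P D"
    and "OP R P"
    and "ind_D R P D"
  shows "(\<forall>A. A \<subseteq> P \<longrightarrow> clD R P D A = dcl R (A \<union> D) \<inter> P) \<and> pregeometry P (clD R P D)"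
proof -
  interpret omin R by unfold_locales (rule assms(1))
  obtain c :: 'a where c: "0 < c" using ex_pos by blast
  have EQ: "clD R P D A = dcl R (A \<union> D) \<inter> P" if "A \<subseteq> P" for A
    by (rule clD_eq[OF c assms(3) assms(2) that])
  have p1: "\<forall>A. A \<subseteq> P \<longrightarrow> A \<subseteq> clD R P D A \<and> clD R P D A \<subseteq> P"
  proof (intro allI impI conjI)
    fix A assume A: "A \<subseteq> P"
    show "A \<subseteq> clD R P D A"
    proof
      fix a assume "a \<in> A"
      then have "a \<in> dcl R (A \<union> D)" by (intro dcl_refl) simp
      then show "a \<in> clD R P D A" using EQ[OF A] A \<open>a \<in> A\<close> by blast
    qed
    show "clD R P D A \<subseteq> P" using EQ[OF A] by simp
  qed
  have p2: "\<forall>A B. A \<subseteq> B \<and> B \<subseteq> P \<longrightarrow> clD R P D A \<subseteq> clD R P D B"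
  proof (intro allI impI)
    fix A B assume AB: "A \<subseteq> B \<and> B \<subseteq> P"
    then have "dcl R (A \<union> D) \<subseteq> dcl R (B \<union> D)" by (intro dcl_mono) blast
    then show "clD R P D A \<subseteq> clD R P D B" using EQ[of A] EQ[of B] AB by auto
  qed
  have p3: "\<forall>A. A \<subseteq> P \<longrightarrow> clD R P D (clD R P D A) = clD R P D A"
  proof (intro allI impI)
    fix A assume A: "A \<subseteq> P"
    have cA: "clD R P D A = dcl R (A \<union> D) \<inter> P" by (rule EQ[OF A])
    have cP: "clD R P D A \<subseteq> P" using cA by simp
    have "clD R P D (clD R P D A) = dcl R (clD R P D A \<union> D) \<inter> P" by (rule EQ[OF cP])
    also have "dcl R (clD R P D A \<union> D) = dcl R (A \<union> D)"
    proof
      have "clD R P D A \<union> D \<subseteq> dcl R (A \<union> D)" using cA dcl_refl[of _ "A \<union> D" R] by auto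
      then show "dcl R (clD R P D A \<union> D) \<subseteq> dcl R (A \<union> D)" by (rule dcl_sub)
      have "A \<subseteq> clD R P D A" using p1 A by blast
      then have "A \<union> D \<subseteq> clD R P D A \<union> D" by blast
      then show "dcl R (A \<union> D) \<subseteq> dcl R (clD R P D A \<union> D)" by (rule dcl_mono)
    qed
    finally show "clD R P D (clD R P D A) = clD R P D A" using cA by simp
  qed
  have p4: "\<forall>A. A \<subseteq> P \<longrightarrow> (\<forall>a\<in>clD R P D A. \<exists>F. finite F \<and> F \<subseteq> A \<and> a \<in> clD R P D F)"
  proof (intro allI impI ballI)
    fix A a assume A: "A \<subseteq> P" and a: "a \<in> clD R P D A"
    then have aP: "a \<in> P" and ad: "a \<in> dcl R (A \<union> D)" using EQ[OF A] by auto
    have "DL R (A \<union> D) 1 (\<lambda>xs. xs ! 0 = a)" using ad by (simp add: dcl_iff)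
    then have "\<exists>F. finite F \<and> F \<subseteq> A \<union> D \<and> DL R F 1 (\<lambda>xs. xs ! 0 = a)" by (rule DL_finite_params)
    then obtain F where F: "finite F" "F \<subseteq> A \<union> D" "DL R F 1 (\<lambda>xs. xs ! 0 = a)" by auto
    have "DL R ((F \<inter> A) \<union> D) 1 (\<lambda>xs. xs ! 0 = a)" by (rule DL_mono[OF F(3)]) (use F(2) in auto)
    then have "a \<in> dcl R ((F \<inter> A) \<union> D)" by (simp add: dcl_iff)
    moreover have "F \<inter> A \<subseteq> P" using A by auto
    ultimately have "a \<in> clD R P D (F \<inter> A)" using EQ[of "F \<inter> A"] aP by auto
    moreover have "finite (F \<inter> A)" using F(1) by simp
    ultimately show "\<exists>F. finite F \<and> F \<subseteq> A \<and> a \<in> clD R P D F" by blast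
  qed
  have p5: "\<forall>A a b. A \<subseteq> P \<and> a \<in> P \<and> b \<in> P \<and> b \<in> clD R P D (insert a A) \<and> b \<notin> clD R P D A \<longrightarrow>
        a \<in> clD R P D (insert b A)"
  proof (intro allI impI)
    fix A a b assume H: "A \<subseteq> P \<and> a \<in> P \<and> b \<in> P \<and> b \<in> clD R P D (insert a A) \<and> b \<notin> clD R P D A"
    then have A: "A \<subseteq> P" and aP: "a \<in> P" and bP: "b \<in> P" by auto
    have iaP: "insert a A \<subseteq> P" and ibP: "insert b A \<subseteq> P" using A aP bP by auto
    have "b \<in> dcl R (insert a A \<union> D)" using H EQ[OF iaP] by auto
    then have b1: "b \<in> dcl R (insert a (A \<union> D))" by simp
    have b2: "b \<notin> dcl R (A \<union> D)" using H EQ[OF A] bP by auto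
    have "a \<in> dcl R (insert b (A \<union> D))" by (rule exchange[OF b1 b2])
    then have "a \<in> dcl R (insert b A \<union> D)" by simp
    then show "a \<in> clD R P D (insert b A)" using EQ[OF ibP] aP by auto
  qed
  have "pregeometry P (clD R P D)"
    unfolding pregeometry_def using p1 p2 p3 p4 p5 by blast
  moreover have "\<forall>A. A \<subseteq> P \<longrightarrow> clD R P D A = dcl R (A \<union> D) \<inter> P" using EQ by blast
  ultimately show ?thesis by blast
qed

end
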